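(* Let $\mathcal{H}_{\rm kin}=\mathcal{H}_R\otimes\mathcal{H}_S$ be a local QRF-system partition for an $[[n,k]]$ Pauli stabilizer code, with $\mathcal{H}_R\simeq(\mathbb{C}^2)^{\otimes(n-k)}$ consisting of $n-k$ physical qubits, such that $G=\mathbb{Z}_2^{\times(n-k)}$ is represented by the code's stabilizers as $g\mapsto U^g_R\otimes U^g_S$, where $g\mapsto U^g_R$ is faithful (possibly projective), $g\mapsto U^g_S$ is non-trivial, and the orientation states satisfy $\braket{g}{h}_R=\delta_{g,h}$ ($R$ ideal). Let $\mathcal{E}=\{E_1,\ldots,E_m\}$ be a set of correctable Pauli errors. Then for every $\ket{\bar\psi}=T_R^\dagger(\ket1_R\otimes\ket\psi_S)\in\mathcal{H}_{\rm pn}$, $$T_RE_i\ket{\bar\psi}=\ket{w(E_i)}_R\otimes L_S(E_i)\ket\psi_S,$$ for some collection of orthonormal states $\ket{w(E_i)}_R\in\mathcal{H}_R$ and unitary operators $L_S(E_i)$ on $\mathcal{H}_S$ (independent of $\psi$).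
   Context: An $[[n,k]]$ Pauli stabilizer code: $\mathcal{H}_{\rm kin}=(\mathbb{C}^2)^{\otimes n}$, $\mathcal{P}_n$ the $n$-qubit Pauli group, $G=\mathbb{Z}_2^{\times(n-k)}$, $g\mapsto U^g\in\mathcal{P}_n$ a faithful unitary representation with $-I\notin U(G)$; $\mathcal{H}_{\rm pn}$ is the common $+1$ eigenspace, $\Pi_{\rm pn}=\frac1{|G|}\sum_gU^g$. Local partition: $R$ is a set of $n-k$ qubits, $S$ the remaining $k$ qubits, $U^g_R$ is the Pauli string of $U^g$ on the qubits of $R$ with prefactor removed and $U^g_S$ the remaining part (carrying the sign), so $U^g=U^g_R\otimes U^g_S$; $U^g_RU^h_R=c(g,h)U^{gh}_R$ with phases $c(g,h)$. The orientation states are $\ket g_R:=U^g_R\ket e_R$ for a seed state $\ket e_R$, forming an orthonormal basis of $\mathcal{H}_R$. Define $\ket1_R=|G|^{-1/2}\sum_g\ket g_R$ and the disentangler $T_R=\sum_{g\in G}\ket g\!\bra g_R\otimes(U^g_S)^\dagger$. A set $\{E_i\}$ is correctable if $\Pi_{\rm pn}E_i^\dagger E_j\Pi_{\rm pn}=C_{ij}\Pi_{\rm pn}$ with $(C_{ij})$ Hermitian. *)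

theory Defs
  imports Complex_Main
begin

text \<open>Qubits are natural numbers; a computational basis state of a set Q of
qubits is a subset x of Q (the qubits in state 1). A vector on Q is a function
nat set => complex vanishing outside Pow Q; an operator on Q is given by its matrix
kernel A y x = <y|A|x>, considered on Pow Q x Pow Q. Tensor products across a
partition Q = R + (Q - R) are realised by splitting basis states x = (x Int R, x - R).\<close>

datatype pauli1 = PI | PX | PY | PZ

type_synonym vec = "nat set \<Rightarrow> complex"
type_synonym op = "nat set \<Rightarrow> nat set \<Rightarrow> complex"
type_synonym pauli = "complex \<times> (nat \<Rightarrow> pauli1)"

fun pmat :: "pauli1 \<Rightarrow> bool \<Rightarrow> bool \<Rightarrow> complex" where
  "pmat PI y x = (if y = x then 1 else 0)"
| "pmat PX y x = (if y = x then 0 else 1)"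
| "pmat PY y x = (if y = x then 0 else if y then \<i> else - \<i>)"
| "pmat PZ y x = (if y = x then (if x then -1 else 1) else 0)"

definition string_op :: "nat set \<Rightarrow> (nat \<Rightarrow> pauli1) \<Rightarrow> op" where
  "string_op Q \<sigma> = (\<lambda>y x. \<Prod>q\<in>Q. pmat (\<sigma> q) (q \<in> y) (q \<in> x))"

definition pauli_op :: "nat set \<Rightarrow> pauli \<Rightarrow> op" where
  "pauli_op Q P = (\<lambda>y x. fst P * string_op Q (snd P) y x)"

definition is_pauli :: "pauli \<Rightarrow> bool" where
  "is_pauli P \<longleftrightarrow> fst P \<in> {1, -1, \<i>, - \<i>}"

definition in_space :: "nat set \<Rightarrow> vec \<Rightarrow> bool" where
  "in_space Q \<psi> \<longleftrightarrow> (\<forall>x. \<not> x \<subseteq> Q \<longrightarrow> \<psi> x = 0)"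

definition app :: "nat set \<Rightarrow> op \<Rightarrow> vec \<Rightarrow> vec" where
  "app Q A \<psi> = (\<lambda>y. if y \<subseteq> Q then (\<Sum>x\<in>Pow Q. A y x * \<psi> x) else 0)"

definition comp :: "nat set \<Rightarrow> op \<Rightarrow> op \<Rightarrow> op" where
  "comp Q A B = (\<lambda>y x. \<Sum>z\<in>Pow Q. A y z * B z x)"

definition adj :: "op \<Rightarrow> op" where
  "adj A = (\<lambda>y x. cnj (A x y))"

definition idop :: op where
  "idop = (\<lambda>y x. if y = x then 1 else 0)"

definition op_eq :: "nat set \<Rightarrow> op \<Rightarrow> op \<Rightarrow> bool" where
  "op_eq Q A B \<longleftrightarrow> (\<forall>y x. y \<subseteq> Q \<longrightarrow> x \<subseteq> Q \<longrightarrow> A y x = B y x)"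

definition inner :: "nat set \<Rightarrow> vec \<Rightarrow> vec \<Rightarrow> complex" where
  "inner Q \<phi> \<chi> = (\<Sum>x\<in>Pow Q. cnj (\<phi> x) * \<chi> x)"

definition unitary_on :: "nat set \<Rightarrow> op \<Rightarrow> bool" where
  "unitary_on Q A \<longleftrightarrow> op_eq Q (comp Q (adj A) A) idop \<and> op_eq Q (comp Q A (adj A)) idop"

definition vtensor :: "nat set \<Rightarrow> vec \<Rightarrow> vec \<Rightarrow> vec" where
  "vtensor R \<phi> \<chi> = (\<lambda>x. \<phi> (x \<inter> R) * \<chi> (x - R))"

definition otensor :: "nat set \<Rightarrow> op \<Rightarrow> op \<Rightarrow> op" where
  "otensor R A B = (\<lambda>y x. A (y \<inter> R) (x \<inter> R) * B (y - R) (x - R))"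

definition ket_bra :: "vec \<Rightarrow> vec \<Rightarrow> op" where
  "ket_bra \<phi> \<chi> = (\<lambda>y x. \<phi> y * cnj (\<chi> x))"

text \<open>The group Z_2^r as Pow {0..<r} with symmetric difference.\<close>
definition grp :: "nat \<Rightarrow> nat set set" where
  "grp r = Pow {0..<r}"

definition gmult :: "nat set \<Rightarrow> nat set \<Rightarrow> nat set" where
  "gmult g h = (g - h) \<union> (h - g)"

definition code_proj :: "nat \<Rightarrow> nat \<Rightarrow> (nat set \<Rightarrow> pauli) \<Rightarrow> op" where
  "code_proj n k U = (\<lambda>y x. (1 / of_nat (card (grp (n - k)))) *
      (\<Sum>g\<in>grp (n - k). pauli_op {0..<n} (U g) y x))"

text \<open>U^g_R: the Pauli string of U^g on R with prefactor removed;
  U^g_S: the rest, carrying the prefactor.\<close>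
definition U_R :: "nat set \<Rightarrow> (nat set \<Rightarrow> pauli) \<Rightarrow> nat set \<Rightarrow> op" where
  "U_R R U g = string_op R (snd (U g))"

definition U_S :: "nat set \<Rightarrow> nat set \<Rightarrow> (nat set \<Rightarrow> pauli) \<Rightarrow> nat set \<Rightarrow> op" where
  "U_S Q R U g = pauli_op (Q - R) (U g)"

definition orient :: "nat set \<Rightarrow> (nat set \<Rightarrow> pauli) \<Rightarrow> vec \<Rightarrow> nat set \<Rightarrow> vec" where
  "orient R U e g = app R (U_R R U g) e"

definition one_R :: "nat \<Rightarrow> nat \<Rightarrow> nat set \<Rightarrow> (nat set \<Rightarrow> pauli) \<Rightarrow> vec \<Rightarrow> vec" where
  "one_R n k R U e = (\<lambda>x. complex_of_real (1 / sqrt (real (card (grp (n - k))))) *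
      (\<Sum>g\<in>grp (n - k). orient R U e g x))"

definition disent :: "nat \<Rightarrow> nat \<Rightarrow> nat set \<Rightarrow> (nat set \<Rightarrow> pauli) \<Rightarrow> vec \<Rightarrow> op" where
  "disent n k R U e = (\<lambda>y x. \<Sum>g\<in>grp (n - k).
      otensor R (ket_bra (orient R U e g) (orient R U e g)) (adj (U_S {0..<n} R U g)) y x)"

end

theory Submission
  imports Defs
begin

lemma sum_Pow_prod:
  fixes f :: "nat \<Rightarrow> bool \<Rightarrow> complex"
  shows "finite Q \<Longrightarrow> (\<Sum>z\<in>Pow Q. \<Prod>q\<in>Q. f q (q \<in> z)) = (\<Prod>q\<in>Q. f q True + f q False)"
proof (induction Q rule: finite_induct)
  case empty
  then show ?case by simp
next
  case (insert a F)
  have inj: "inj_on (insert a) (Pow F)" using insert(2)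
    by (smt (verit, ccfv_SIG) PowD inj_onI insert_ident subset_iff)
  have disj: "Pow F \<inter> insert a ` Pow F = {}" using insert(2) by auto
  have s1: "(\<Sum>z\<in>Pow F. \<Prod>q\<in>insert a F. f q (q \<in> z)) = f a False * (\<Sum>z\<in>Pow F. \<Prod>q\<in>F. f q (q \<in> z))"
  proof -
    have "\<And>z. z \<in> Pow F \<Longrightarrow> a \<notin> z" using insert(2) by auto
    then have "\<And>z. z \<in> Pow F \<Longrightarrow> (\<Prod>q\<in>insert a F. f q (q \<in> z)) = f a False * (\<Prod>q\<in>F. f q (q \<in> z))"
      using insert(1,2) by (simp add: prod.insert)
    then have "(\<Sum>z\<in>Pow F. \<Prod>q\<in>insert a F. f q (q \<in> z)) = (\<Sum>z\<in>Pow F. f a False * (\<Prod>q\<in>F. f q (q \<in> z)))"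
      by (intro sum.cong) auto
    then show ?thesis by (simp only: sum_distrib_left)
  qed
  have s2: "(\<Sum>z\<in>insert a ` Pow F. \<Prod>q\<in>insert a F. f q (q \<in> z)) = f a True * (\<Sum>z\<in>Pow F. \<Prod>q\<in>F. f q (q \<in> z))"
  proof -
    have "(\<Sum>z\<in>insert a ` Pow F. \<Prod>q\<in>insert a F. f q (q \<in> z)) = (\<Sum>z\<in>Pow F. \<Prod>q\<in>insert a F. f q (q \<in> insert a z))"
      using sum.reindex[OF inj, of "\<lambda>z. \<Prod>q\<in>insert a F. f q (q \<in> z)"] by (simp add: o_def)
    also have "\<dots> = (\<Sum>z\<in>Pow F. f a True * (\<Prod>q\<in>F. f q (q \<in> z)))"
    proof (intro sum.cong refl)
      fix z assume "z \<in> Pow F"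
      have "(\<Prod>q\<in>F. f q (q \<in> insert a z)) = (\<Prod>q\<in>F. f q (q \<in> z))"
      proof (intro prod.cong refl)
        fix q assume "q \<in> F" then have "q \<noteq> a" using insert(2) by auto
        then show "f q (q \<in> insert a z) = f q (q \<in> z)" by simp
      qed
      then show "(\<Prod>q\<in>insert a F. f q (q \<in> insert a z)) = f a True * (\<Prod>q\<in>F. f q (q \<in> z))"
        using insert(1,2) by (simp add: prod.insert)
    qed
    finally show ?thesis by (simp add: sum_distrib_left)
  qed
  have "(\<Sum>z\<in>Pow (insert a F). \<Prod>q\<in>insert a F. f q (q \<in> z)) =
      (\<Sum>z\<in>Pow F. \<Prod>q\<in>insert a F. f q (q \<in> z)) + (\<Sum>z\<in>insert a ` Pow F. \<Prod>q\<in>insert a F. f q (q \<in> z))"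
    unfolding Pow_insert using insert disj by (intro sum.union_disjoint) auto
  also have "\<dots> = (f a True + f a False) * (\<Sum>z\<in>Pow F. \<Prod>q\<in>F. f q (q \<in> z))"
    unfolding s1 s2 by (simp add: algebra_simps)
  finally show ?case using insert by simp
qed

definition pm2 :: "pauli1 \<Rightarrow> pauli1 \<Rightarrow> bool \<Rightarrow> bool \<Rightarrow> complex" where
  "pm2 a c y x = pmat a y True * pmat c True x + pmat a y False * pmat c False x"

definition sg :: "pauli1 \<Rightarrow> pauli1 \<Rightarrow> complex" where
  "sg a c = (if a = PI \<or> c = PI \<or> a = c then 1 else -1)"

lemma pm2_sq: "pm2 a a y x = (if y = x then 1 else 0)"
  by (cases a; cases y; cases x) (auto simp: pm2_def)

lemma pm2_comm: "pm2 a c y x = sg a c * pm2 c a y x"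
  by (cases a; cases c; cases y; cases x) (auto simp: pm2_def sg_def)

lemma pm2_nz: "pm2 a c False True \<noteq> 0 \<or> pm2 a c False False \<noteq> 0"
  by (cases a; cases c) (auto simp: pm2_def)

lemma pmat_herm: "cnj (pmat a y x) = pmat a x y"
  by (cases a; cases y; cases x) auto

lemma sg_sym: "sg a c = sg c a" by (auto simp: sg_def)
lemma sg_sq: "sg a c * sg a c = 1" by (auto simp: sg_def)
lemma sg_cnj: "cnj (sg a c) = sg a c" by (auto simp: sg_def)

lemma comp_string:
  assumes "finite Q"
  shows "comp Q (string_op Q \<tau>) (string_op Q \<sigma>) y x = (\<Prod>q\<in>Q. pm2 (\<tau> q) (\<sigma> q) (q \<in> y) (q \<in> x))"
proof -
  have "comp Q (string_op Q \<tau>) (string_op Q \<sigma>) y x =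
     (\<Sum>z\<in>Pow Q. \<Prod>q\<in>Q. pmat (\<tau> q) (q \<in> y) (q \<in> z) * pmat (\<sigma> q) (q \<in> z) (q \<in> x))"
    unfolding comp_def string_op_def by (simp add: prod.distrib)
  also have "\<dots> = (\<Prod>q\<in>Q. pm2 (\<tau> q) (\<sigma> q) (q \<in> y) (q \<in> x))"
    using sum_Pow_prod[OF assms, of "\<lambda>q b. pmat (\<tau> q) (q \<in> y) b * pmat (\<sigma> q) b (q \<in> x)"]
    by (simp add: pm2_def)
  finally show ?thesis .
qed

lemma prod_delta:
  assumes "finite Q" "y \<subseteq> Q" "x \<subseteq> Q"
  shows "(\<Prod>q\<in>Q. (if (q \<in> y) = (q \<in> x) then 1 else 0 :: complex)) = (if y = x then 1 else 0)"
proof (cases "y = x")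
  case True then show ?thesis by simp
next
  case False
  then obtain q where "q \<in> Q" "(q \<in> y) \<noteq> (q \<in> x)" using assms by blast
  then have "(\<Prod>q\<in>Q. (if (q \<in> y) = (q \<in> x) then 1 else 0 :: complex)) = 0"
    using assms(1) by (subst prod_zero_iff) auto
  then show ?thesis using False by simp
qed

lemma string_sq:
  assumes "finite Q" "y \<subseteq> Q" "x \<subseteq> Q"
  shows "comp Q (string_op Q \<sigma>) (string_op Q \<sigma>) y x = idop y x"
  using comp_string[OF assms(1)] prod_delta[OF assms] by (simp add: pm2_sq idop_def)

lemma string_herm: "cnj (string_op Q \<sigma> y x) = string_op Q \<sigma> x y"
  unfolding string_op_def by (simp add: pmat_herm)

lemma comp_pauli: "comp Q (pauli_op Q P) (pauli_op Q P') y x = fst P * fst P' * comp Q (string_op Q (snd P)) (string_op Q (snd P')) y x"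
  unfolding comp_def pauli_op_def by (simp add: sum_distrib_left mult_ac)

definition chi :: "nat set \<Rightarrow> pauli \<Rightarrow> pauli \<Rightarrow> complex" where
  "chi Q P P' = (\<Prod>q\<in>Q. sg (snd P q) (snd P' q))"

lemma pauli_commute:
  assumes "finite Q"
  shows "comp Q (pauli_op Q P) (pauli_op Q P') y x = chi Q P P' * comp Q (pauli_op Q P') (pauli_op Q P) y x"
  unfolding comp_pauli comp_string[OF assms] chi_def
  by (subst pm2_comm) (simp add: prod.distrib mult_ac)

lemma chi_sym: "chi Q P P' = chi Q P' P" unfolding chi_def by (simp add: sg_sym)
lemma chi_sq: "chi Q P P' * chi Q P P' = 1" unfolding chi_def by (simp add: prod.distrib[symmetric] sg_sq)
lemma chi_cnj: "cnj (chi Q P P') = chi Q P P'" unfolding chi_def by (simp add: sg_cnj)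
lemma chi_pm: "chi Q P P' = 1 \<or> chi Q P P' = -1"
proof -
  have "chi Q P P' * chi Q P P' = 1" by (rule chi_sq)
  then show ?thesis by (metis (no_types, lifting) mult_cancel_left mult_minus_left mult_1 square_eq_1_iff)
qed

lemma is_pauli_norm: "is_pauli P \<Longrightarrow> cnj (fst P) * fst P = 1"
  unfolding is_pauli_def by auto

lemma adj_pauli: "adj (pauli_op Q P) y x = cnj (fst P) * string_op Q (snd P) y x"
  unfolding adj_def pauli_op_def by (simp add: string_herm)

lemma pauli_unitary:
  assumes "finite Q" "is_pauli P"
  shows "op_eq Q (comp Q (adj (pauli_op Q P)) (pauli_op Q P)) idop"
    and "op_eq Q (comp Q (pauli_op Q P) (adj (pauli_op Q P))) idop"
proof -
  have c: "cnj (fst P) * fst P = 1" "fst P * cnj (fst P) = 1" using is_pauli_norm[OF assms(2)] by (auto simp: mult.commute)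
  show "op_eq Q (comp Q (adj (pauli_op Q P)) (pauli_op Q P)) idop"
    unfolding op_eq_def comp_def adj_pauli
    by (auto simp: pauli_op_def mult_ac sum_distrib_left[symmetric] c
          string_sq[OF assms(1), unfolded comp_def])
  show "op_eq Q (comp Q (pauli_op Q P) (adj (pauli_op Q P))) idop"
    unfolding op_eq_def comp_def adj_pauli
    by (auto simp: pauli_op_def mult_ac sum_distrib_left[symmetric] c
          string_sq[OF assms(1), unfolded comp_def])
qed

lemma split_facts:
  assumes "a \<subseteq> R" "b \<subseteq> Q - R"
  shows "(a \<union> b) \<inter> R = a" "(a \<union> b) - R = b"
  using assms by auto

lemma pow_split:
  assumes "finite Q" "R \<subseteq> Q"
  shows "(\<Sum>x\<in>Pow Q. f x) = (\<Sum>a\<in>Pow R. \<Sum>b\<in>Pow (Q - R). f (a \<union> b))"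
proof -
  have "(\<Sum>a\<in>Pow R. \<Sum>b\<in>Pow (Q - R). f (a \<union> b)) = (\<Sum>p\<in>Pow R \<times> Pow (Q - R). f (fst p \<union> snd p))"
    by (simp add: sum.cartesian_product split_def)
  also have "\<dots> = (\<Sum>x\<in>Pow Q. f x)"
    apply (rule sum.reindex_bij_witness[of _ "\<lambda>x. (x \<inter> R, x - R)" "\<lambda>p. fst p \<union> snd p"])
    using assms by auto
  finally show ?thesis by simp
qed

lemma pauli_split:
  assumes "finite Q" "R \<subseteq> Q"
  shows "pauli_op Q P y x = string_op R (snd P) (y \<inter> R) (x \<inter> R) * pauli_op (Q - R) P (y - R) (x - R)"
proof -
  have fR: "finite R" using assms finite_subset by blast
  have "string_op Q (snd P) y x = string_op R (snd P) y x * string_op (Q - R) (snd P) y x"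
    unfolding string_op_def using prod.subset_diff[OF assms(2) assms(1)] by (simp add: mult.commute)
  moreover have "string_op R (snd P) y x = string_op R (snd P) (y \<inter> R) (x \<inter> R)"
    unfolding string_op_def by (intro prod.cong) auto
  moreover have "string_op (Q - R) (snd P) y x = string_op (Q - R) (snd P) (y - R) (x - R)"
    unfolding string_op_def by (intro prod.cong) auto
  ultimately show ?thesis unfolding pauli_op_def by (simp add: mult_ac)
qed

lemma app_app: "app Q A (app Q B v) = app Q (comp Q A B) v"
proof
  fix y
  have "(\<Sum>x\<in>Pow Q. A y x * app Q B v x) = (\<Sum>x\<in>Pow Q. \<Sum>z\<in>Pow Q. A y x * B x z * v z)"
    unfolding app_def by (rule sum.cong[OF refl]) (simp add: sum_distrib_left mult.assoc)
  also have "\<dots> = (\<Sum>z\<in>Pow Q. \<Sum>x\<in>Pow Q. A y x * B x z * v z)" by (rule sum.swap)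
  also have "\<dots> = (\<Sum>z\<in>Pow Q. comp Q A B y z * v z)"
    unfolding comp_def by (rule sum.cong[OF refl]) (simp add: sum_distrib_right)
  finally show "app Q A (app Q B v) y = app Q (comp Q A B) v y"
    unfolding app_def[of Q A "app Q B v"] app_def[of Q "comp Q A B"] by simp
qed

lemma app_cong: "op_eq Q A B \<Longrightarrow> app Q A v = app Q B v"
  unfolding app_def op_eq_def by (auto intro!: sum.cong)

lemma app_in_space: "in_space Q (app Q A v)"
  unfolding in_space_def app_def by auto

lemma app_scale_sum:
  "app Q A (\<lambda>y. c * (\<Sum>g\<in>G. F g y)) = (\<lambda>y. c * (\<Sum>g\<in>G. app Q A (F g) y))"
proof
  fix y
  have "(\<Sum>x\<in>Pow Q. A y x * (c * (\<Sum>g\<in>G. F g x))) = (\<Sum>x\<in>Pow Q. \<Sum>g\<in>G. c * (A y x * F g x))"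
    by (rule sum.cong[OF refl]) (simp add: sum_distrib_left mult.assoc mult.left_commute)
  also have "\<dots> = (\<Sum>g\<in>G. \<Sum>x\<in>Pow Q. c * (A y x * F g x))" by (rule sum.swap)
  also have "\<dots> = c * (\<Sum>g\<in>G. \<Sum>x\<in>Pow Q. A y x * F g x)" by (simp add: sum_distrib_left)
  finally show "app Q A (\<lambda>y. c * (\<Sum>g\<in>G. F g y)) y = c * (\<Sum>g\<in>G. app Q A (F g) y)"
    unfolding app_def by simp
qed

lemma app_scale: "app Q A (\<lambda>y. c * v y) = (\<lambda>y. c * app Q A v y)"
  unfolding app_def by (auto simp: sum_distrib_left mult_ac)

lemma app_scale_op: "app Q (\<lambda>y x. c * A y x) v = (\<lambda>y. c * app Q A v y)"
  unfolding app_def by (auto simp: sum_distrib_left mult_ac)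

lemma comp_assoc: "comp Q (comp Q A B) C = comp Q A (comp Q B C)"
proof (intro ext)
  fix y x
  have "(\<Sum>z\<in>Pow Q. (\<Sum>u\<in>Pow Q. A y u * B u z) * C z x) = (\<Sum>z\<in>Pow Q. \<Sum>u\<in>Pow Q. A y u * (B u z * C z x))"
    by (simp add: sum_distrib_right mult.assoc)
  also have "\<dots> = (\<Sum>u\<in>Pow Q. \<Sum>z\<in>Pow Q. A y u * (B u z * C z x))" by (rule sum.swap)
  also have "\<dots> = (\<Sum>u\<in>Pow Q. A y u * (\<Sum>z\<in>Pow Q. B u z * C z x))" by (simp add: sum_distrib_left)
  finally show "comp Q (comp Q A B) C y x = comp Q A (comp Q B C) y x" unfolding comp_def .
qed

lemma comp_cong1: "op_eq Q A A' \<Longrightarrow> op_eq Q (comp Q A B) (comp Q A' B)"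
  unfolding op_eq_def comp_def by auto

lemma comp_cong2: "op_eq Q B B' \<Longrightarrow> op_eq Q (comp Q A B) (comp Q A B')"
  unfolding op_eq_def comp_def by auto

lemma comp_scale1: "comp Q (\<lambda>y x. c * A y x) B = (\<lambda>y x. c * comp Q A B y x)"
  unfolding comp_def by (auto simp: sum_distrib_left mult_ac)

lemma comp_scale2: "comp Q A (\<lambda>y x. c * B y x) = (\<lambda>y x. c * comp Q A B y x)"
  unfolding comp_def by (auto simp: sum_distrib_left mult_ac)

lemma op_eq_trans: "op_eq Q A B \<Longrightarrow> op_eq Q B C \<Longrightarrow> op_eq Q A C"
  unfolding op_eq_def by auto

lemma op_eq_sym: "op_eq Q A B \<Longrightarrow> op_eq Q B A"
  unfolding op_eq_def by auto

lemma op_eq_refl: "op_eq Q A A"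
  unfolding op_eq_def by auto

lemma inner_app:
  assumes "op_eq Q (comp Q (adj A) A) idop" "finite Q"
  shows "inner Q (app Q A u) (app Q A v) = inner Q u v"
proof -
  have "inner Q (app Q A u) (app Q A v) =
     (\<Sum>y\<in>Pow Q. (\<Sum>x\<in>Pow Q. cnj (A y x) * cnj (u x)) * (\<Sum>x'\<in>Pow Q. A y x' * v x'))"
    unfolding inner_def app_def by (auto intro!: sum.cong simp: cnj_sum)
  also have "\<dots> = (\<Sum>y\<in>Pow Q. \<Sum>x\<in>Pow Q. \<Sum>x'\<in>Pow Q. cnj (u x) * v x' * (cnj (A y x) * A y x'))"
    by (simp add: sum_distrib_left sum_distrib_right mult_ac)
  also have "\<dots> = (\<Sum>x\<in>Pow Q. \<Sum>x'\<in>Pow Q. cnj (u x) * v x' * (\<Sum>y\<in>Pow Q. cnj (A y x) * A y x'))"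
  proof -
    have "(\<Sum>y\<in>Pow Q. \<Sum>x\<in>Pow Q. \<Sum>x'\<in>Pow Q. cnj (u x) * v x' * (cnj (A y x) * A y x')) =
        (\<Sum>x\<in>Pow Q. \<Sum>y\<in>Pow Q. \<Sum>x'\<in>Pow Q. cnj (u x) * v x' * (cnj (A y x) * A y x'))"
      by (rule sum.swap)
    also have "\<dots> = (\<Sum>x\<in>Pow Q. \<Sum>x'\<in>Pow Q. \<Sum>y\<in>Pow Q. cnj (u x) * v x' * (cnj (A y x) * A y x'))"
      by (rule sum.cong[OF refl], rule sum.swap)
    finally show ?thesis by (simp add: sum_distrib_left)
  qed
  also have "\<dots> = (\<Sum>x\<in>Pow Q. \<Sum>x'\<in>Pow Q. cnj (u x) * v x' * idop x x')"
  proof (intro sum.cong refl)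
    fix x x' assume "x \<in> Pow Q" "x' \<in> Pow Q"
    then have "comp Q (adj A) A x x' = idop x x'" using assms(1) unfolding op_eq_def by auto
    then show "cnj (u x) * v x' * (\<Sum>y\<in>Pow Q. cnj (A y x) * A y x') = cnj (u x) * v x' * idop x x'"
      unfolding comp_def adj_def by simp
  qed
  also have "\<dots> = inner Q u v"
  proof -
    have "\<And>x. x \<in> Pow Q \<Longrightarrow> (\<Sum>x'\<in>Pow Q. cnj (u x) * v x' * idop x x') = cnj (u x) * v x"
    proof -
      fix x assume x: "x \<in> Pow Q"
      have "(\<Sum>x'\<in>Pow Q. cnj (u x) * v x' * idop x x') = (\<Sum>x'\<in>Pow Q. if x' = x then cnj (u x) * v x else 0)"
        unfolding idop_def by (rule sum.cong) auto
      also have "\<dots> = cnj (u x) * v x" using x assms(2) by (subst sum.delta) auto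
      finally show "(\<Sum>x'\<in>Pow Q. cnj (u x) * v x' * idop x x') = cnj (u x) * v x" .
    qed
    then show ?thesis unfolding inner_def by (rule sum.cong[OF refl])
  qed
  finally show ?thesis .
qed

lemma inner_vtensor:
  assumes "finite Q" "R \<subseteq> Q"
  shows "inner Q (vtensor R u v) (vtensor R u' v') = inner R u u' * inner (Q - R) v v'"
proof -
  have "inner Q (vtensor R u v) (vtensor R u' v') =
     (\<Sum>a\<in>Pow R. \<Sum>b\<in>Pow (Q - R). cnj (u a) * u' a * (cnj (v b) * v' b))"
    unfolding inner_def vtensor_def pow_split[OF assms]
    by (intro sum.cong refl) (auto simp: split_facts mult_ac)
  also have "\<dots> = inner R u u' * inner (Q - R) v v'"
    unfolding inner_def sum_product by simp
  finally show ?thesis .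
qed

lemma sum_delta_l:
  assumes "finite A" "x \<in> A"
  shows "(\<Sum>y\<in>A. (if x = y then 1 else 0) * (f y :: complex)) = f x"
proof -
  have "(\<Sum>y\<in>A. (if x = y then 1 else 0) * f y) = (\<Sum>y\<in>A. if x = y then f y else 0)"
    by (rule sum.cong) auto
  also have "\<dots> = f x" using assms by (simp add: sum.delta)
  finally show ?thesis .
qed

lemma sum_delta_r:
  assumes "finite A" "x \<in> A"
  shows "(\<Sum>y\<in>A. (f y :: complex) * (if x = y then 1 else 0)) = f x"
  using sum_delta_l[OF assms, of f] by (simp add: mult.commute)

lemma sum_swap4:
  "(\<Sum>x\<in>A. \<Sum>y\<in>B. \<Sum>j\<in>C. \<Sum>j'\<in>D. f x y j j') = (\<Sum>j\<in>C. \<Sum>j'\<in>D. \<Sum>x\<in>A. \<Sum>y\<in>B. (f x y j j' :: complex))"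
proof -
  have "(\<Sum>x\<in>A. \<Sum>y\<in>B. \<Sum>j\<in>C. \<Sum>j'\<in>D. f x y j j') = (\<Sum>x\<in>A. \<Sum>j\<in>C. \<Sum>y\<in>B. \<Sum>j'\<in>D. f x y j j')"
    by (rule sum.cong[OF refl], rule sum.swap)
  also have "\<dots> = (\<Sum>x\<in>A. \<Sum>j\<in>C. \<Sum>j'\<in>D. \<Sum>y\<in>B. f x y j j')"
    by (rule sum.cong[OF refl], rule sum.cong[OF refl], rule sum.swap)
  also have "\<dots> = (\<Sum>j\<in>C. \<Sum>x\<in>A. \<Sum>j'\<in>D. \<Sum>y\<in>B. f x y j j')"
    by (rule sum.swap)
  also have "\<dots> = (\<Sum>j\<in>C. \<Sum>j'\<in>D. \<Sum>x\<in>A. \<Sum>y\<in>B. f x y j j')"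
    by (rule sum.cong[OF refl], rule sum.swap)
  finally show ?thesis .
qed

lemma square_complete:
  fixes v :: "'j \<Rightarrow> 'a \<Rightarrow> complex"
  assumes fA: "finite A" and fJ: "finite J" and cJ: "card J = card A"
    and on: "\<And>j j'. j \<in> J \<Longrightarrow> j' \<in> J \<Longrightarrow> (\<Sum>x\<in>A. cnj (v j x) * v j' x) = (if j = j' then 1 else 0)"
    and x: "x \<in> A" and y: "y \<in> A"
  shows "(\<Sum>j\<in>J. v j x * cnj (v j y)) = (if x = y then 1 else 0)"
proof -
  define K where "K x y = (\<Sum>j\<in>J. v j x * cnj (v j y))" for x y
  define D where "D x y = (if x = y then 1 else 0 :: complex)" for x y :: 'a
  have on1: "\<And>j. j \<in> J \<Longrightarrow> (\<Sum>x\<in>A. v j x * cnj (v j x)) = 1"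
    using on by (simp add: mult.commute)
  have on2: "\<And>j. j \<in> J \<Longrightarrow> (\<Sum>x\<in>A. cnj (v j x) * v j x) = 1"
    using on by simp
  have KK: "(\<Sum>x\<in>A. \<Sum>y\<in>A. K x y * cnj (K x y)) = of_nat (card J)"
  proof -
    have "(\<Sum>x\<in>A. \<Sum>y\<in>A. K x y * cnj (K x y)) =
       (\<Sum>x\<in>A. \<Sum>y\<in>A. \<Sum>j\<in>J. \<Sum>j'\<in>J. (cnj (v j' x) * v j x) * (cnj (v j y) * v j' y))"
      unfolding K_def by (simp add: sum_product mult_ac)
    also have "\<dots> = (\<Sum>j\<in>J. \<Sum>j'\<in>J. \<Sum>x\<in>A. \<Sum>y\<in>A. (cnj (v j' x) * v j x) * (cnj (v j y) * v j' y))"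
      by (rule sum_swap4)
    also have "\<dots> = (\<Sum>j\<in>J. \<Sum>j'\<in>J. (\<Sum>x\<in>A. cnj (v j' x) * v j x) * (\<Sum>y\<in>A. cnj (v j y) * v j' y))"
      by (simp add: sum_product)
    also have "\<dots> = (\<Sum>j\<in>J. \<Sum>j'\<in>J. (if j = j' then 1 else 0) * (if j = j' then 1 else 0))"
      using on by (intro sum.cong refl) auto
    also have "\<dots> = (\<Sum>j\<in>J. 1)"
      using fJ by (intro sum.cong refl) (simp add: sum_delta_l)
    finally show ?thesis by simp
  qed
  have Kd: "(\<Sum>x\<in>A. \<Sum>y\<in>A. D x y * cnj (K x y)) = of_nat (card J)"
  proof -
    have "(\<Sum>x\<in>A. \<Sum>y\<in>A. D x y * cnj (K x y)) = (\<Sum>x\<in>A. cnj (K x x))"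
      unfolding D_def using fA by (intro sum.cong refl) (simp add: sum_delta_l)
    also have "\<dots> = (\<Sum>x\<in>A. \<Sum>j\<in>J. cnj (v j x) * v j x)"
      unfolding K_def by simp
    also have "\<dots> = (\<Sum>j\<in>J. \<Sum>x\<in>A. cnj (v j x) * v j x)" by (rule sum.swap)
    also have "\<dots> = (\<Sum>j\<in>J. 1)" using on2 by simp
    finally show ?thesis by simp
  qed
  have dK: "(\<Sum>x\<in>A. \<Sum>y\<in>A. K x y * cnj (D x y)) = of_nat (card J)"
  proof -
    have "(\<Sum>x\<in>A. \<Sum>y\<in>A. K x y * cnj (D x y)) = (\<Sum>x\<in>A. K x x)"
    proof (rule sum.cong[OF refl])
      fix x assume "x \<in> A"
      have "(\<Sum>y\<in>A. K x y * cnj (D x y)) = (\<Sum>y\<in>A. K x y * (if x = y then 1 else 0))"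
        unfolding D_def by (rule sum.cong) auto
      then show "(\<Sum>y\<in>A. K x y * cnj (D x y)) = K x x" using sum_delta_r[OF fA \<open>x \<in> A\<close>] by simp
    qed
    also have "\<dots> = (\<Sum>x\<in>A. \<Sum>j\<in>J. v j x * cnj (v j x))"
      unfolding K_def by simp
    also have "\<dots> = (\<Sum>j\<in>J. \<Sum>x\<in>A. v j x * cnj (v j x))" by (rule sum.swap)
    also have "\<dots> = (\<Sum>j\<in>J. 1)" using on1 by simp
    finally show ?thesis by simp
  qed
  have dd: "(\<Sum>x\<in>A. \<Sum>y\<in>A. D x y * cnj (D x y)) = of_nat (card A)"
  proof -
    have "(\<Sum>x\<in>A. \<Sum>y\<in>A. D x y * cnj (D x y)) = (\<Sum>x\<in>A. 1)"
      unfolding D_def using fA by (intro sum.cong refl) (simp add: sum_delta_l[of A, simplified])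
    then show ?thesis by simp
  qed
  have expand: "\<And>x y. (D x y - K x y) * cnj (D x y - K x y) =
      D x y * cnj (D x y) - D x y * cnj (K x y) - K x y * cnj (D x y) + K x y * cnj (K x y)"
    by (simp add: algebra_simps)
  have tot: "(\<Sum>x\<in>A. \<Sum>y\<in>A. (D x y - K x y) * cnj (D x y - K x y)) = 0"
    unfolding expand using KK Kd dK dd cJ by (simp add: sum.distrib sum_subtractf)
  have tot2: "complex_of_real (\<Sum>x\<in>A. \<Sum>y\<in>A. (norm (D x y - K x y))\<^sup>2) = 0"
  proof -
    have "complex_of_real (\<Sum>x\<in>A. \<Sum>y\<in>A. (norm (D x y - K x y))\<^sup>2) =
        (\<Sum>x\<in>A. \<Sum>y\<in>A. complex_of_real ((norm (D x y - K x y))\<^sup>2))"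
      by (simp only: of_real_sum)
    also have "\<dots> = (\<Sum>x\<in>A. \<Sum>y\<in>A. (D x y - K x y) * cnj (D x y - K x y))"
      by (simp only: complex_norm_square)
    finally show ?thesis using tot by simp
  qed
  then have "(\<Sum>x\<in>A. \<Sum>y\<in>A. (norm (D x y - K x y))\<^sup>2) = 0" by (simp only: of_real_eq_0_iff)
  then have "\<forall>x\<in>A. (\<Sum>y\<in>A. (norm (D x y - K x y))\<^sup>2) = 0"
    using fA by (subst (asm) sum_nonneg_eq_0_iff) (auto intro: sum_nonneg)
  then have "(norm (D x y - K x y))\<^sup>2 = 0"
    using fA x y by (subst (asm) sum_nonneg_eq_0_iff) auto
  then have "K x y = D x y" by simp
  then show ?thesis unfolding K_def D_def .
qed

lemmas [trans] = op_eq_trans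

lemma grp_empty: "{} \<in> grp r" unfolding grp_def by auto
lemma gmult_closed: "g \<in> grp r \<Longrightarrow> h \<in> grp r \<Longrightarrow> gmult g h \<in> grp r"
  unfolding grp_def gmult_def by auto
lemma gmult_inv: "gmult h (gmult h g) = g" unfolding gmult_def by auto
lemma gmult_self: "gmult h h = {}" unfolding gmult_def by auto
lemma gmult_empty: "gmult {} g = g" unfolding gmult_def by auto
lemma card_grp: "card (grp r) = 2 ^ r" unfolding grp_def by (simp add: card_Pow)
lemma finite_grp: "finite (grp r)" unfolding grp_def by simp

lemma sum_gmult_reindex:
  assumes "h \<in> grp r"
  shows "(\<Sum>g\<in>grp r. f (gmult h g)) = (\<Sum>g\<in>grp r. (f g :: complex))"
  by (rule sum.reindex_bij_witness[of _ "gmult h" "gmult h"])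
     (use assms in \<open>auto simp: gmult_inv gmult_closed\<close>)

lemma comp_idop:
  assumes "finite Q" "y \<subseteq> Q" "x \<subseteq> Q"
  shows "comp Q idop idop y x = idop y x"
proof -
  have "comp Q idop idop y x = (\<Sum>z\<in>Pow Q. (if y = z then 1 else 0) * idop z x)"
    unfolding comp_def idop_def by simp
  also have "\<dots> = idop y x" using assms by (subst sum_delta_l) auto
  finally show ?thesis .
qed

locale qrf =
  fixes n k :: nat and U :: "nat set \<Rightarrow> pauli" and R :: "nat set" and e :: vec
  assumes U_pauli: "\<forall>g\<in>grp (n - k). is_pauli (U g)"
    and U_hom: "\<forall>g\<in>grp (n - k). \<forall>h\<in>grp (n - k).
       op_eq {0..<n} (pauli_op {0..<n} (U (gmult g h)))
         (comp {0..<n} (pauli_op {0..<n} (U g)) (pauli_op {0..<n} (U h)))"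
    and R_sub: "R \<subseteq> {0..<n}" and R_card: "card R = n - k"
    and ideal: "\<forall>g\<in>grp (n - k). \<forall>h\<in>grp (n - k).
       inner R (orient R U e g) (orient R U e h) = (if g = h then 1 else 0)"
begin

abbreviation "QQ \<equiv> {0..<n}"
abbreviation "SS \<equiv> {0..<n} - R"
abbreviation "GG \<equiv> grp (n - k)"
abbreviation "NN \<equiv> card (grp (n - k))"
abbreviation "PP g \<equiv> pauli_op {0..<n} (U g)"
abbreviation "URR g \<equiv> U_R R U g"
abbreviation "USS g \<equiv> U_S {0..<n} R U g"
abbreviation "oo g \<equiv> orient R U e g"
abbreviation "TT \<equiv> disent n k R U e"
abbreviation "ss \<equiv> complex_of_real (1 / sqrt (real (card (grp (n - k)))))"

lemma fQ: "finite QQ" by simp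
lemma fR: "finite R" using R_sub finite_subset by blast
lemma fS: "finite SS" by simp
lemma fG: "finite GG" by (rule finite_grp)
lemma NN_pos: "NN > 0" by (simp add: card_grp)
lemma card_PowR: "card (Pow R) = NN" using fR R_card by (simp add: card_Pow card_grp)

lemma ss_sq: "cnj ss * ss = 1 / of_nat NN"
proof -
  have "real NN > 0" using NN_pos by simp
  then have "(1 / sqrt (real NN)) * (1 / sqrt (real NN)) = 1 / real NN"
    by (simp add: real_sqrt_mult[symmetric])
  then have "complex_of_real ((1 / sqrt (real NN)) * (1 / sqrt (real NN))) = complex_of_real (1 / real NN)"
    by simp
  then show ?thesis by (simp only: complex_cnj_complex_of_real of_real_mult of_real_divide of_real_1 of_real_of_nat_eq complex_cnj_divide complex_cnj_one)
qed

lemma ss_sqrt: "ss * complex_of_real (sqrt (real NN)) = 1"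
proof -
  have "real NN > 0" using NN_pos by simp
  then have "1 / sqrt (real NN) * sqrt (real NN) = 1" by simp
  then show ?thesis by (metis of_real_1 of_real_mult)
qed

lemma sqrt_sq: "cnj (complex_of_real (sqrt (real NN))) * complex_of_real (sqrt (real NN)) = of_nat NN"
proof -
  have "sqrt (real NN) * sqrt (real NN) = real NN" by simp
  then have "complex_of_real (sqrt (real NN) * sqrt (real NN)) = complex_of_real (real NN)" by simp
  then show ?thesis by (simp only: complex_cnj_complex_of_real of_real_mult of_real_of_nat_eq)
qed

lemma P_split: "PP g y x = URR g (y \<inter> R) (x \<inter> R) * USS g (y - R) (x - R)"
  unfolding U_R_def U_S_def by (rule pauli_split[OF fQ R_sub])

lemma P_empty: "op_eq QQ (PP {}) idop"
proof -
  define c where "c = fst (U {})"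
  have pa: "is_pauli (U {})" using U_pauli grp_empty by blast
  have cnz: "c \<noteq> 0" using pa unfolding is_pauli_def c_def by auto
  have sq: "op_eq QQ (comp QQ (PP {}) (PP {})) (\<lambda>y x. c * c * idop y x)"
    unfolding op_eq_def comp_pauli c_def using string_sq[OF fQ] by simp
  have h: "op_eq QQ (PP {}) (comp QQ (PP {}) (PP {}))"
    using U_hom grp_empty[of "n - k"] gmult_self[of "{}"] by metis
  have P1: "op_eq QQ (PP {}) (\<lambda>y x. c * c * idop y x)" using op_eq_trans[OF h sq] .
  have "op_eq QQ (comp QQ (PP {}) (PP {})) (comp QQ (\<lambda>y x. c * c * idop y x) (\<lambda>y x. c * c * idop y x))"
    using comp_cong1[OF P1] comp_cong2[OF P1] op_eq_trans by blast
  then have "op_eq QQ (PP {}) (\<lambda>y x. c * c * (c * c * comp QQ idop idop y x))"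
    using h op_eq_trans by (simp add: comp_scale1 comp_scale2)
  then have "PP {} {} {} = c * c * (c * c * comp QQ idop idop {} {})" unfolding op_eq_def by simp
  moreover have "PP {} {} {} = c * c" using P1 unfolding op_eq_def idop_def by simp
  moreover have "comp QQ idop idop {} {} = 1" using comp_idop[OF fQ] by (simp add: idop_def)
  ultimately have "c * c * (c * c) = c * c * 1" by simp
  then have "c * c = 1" using cnz by (metis mult_cancel_left mult_eq_0_iff)
  then show ?thesis using P1 by simp
qed

lemma c_sq:
  assumes "h \<in> GG"
  shows "fst (U h) * fst (U h) = 1"
proof -
  have "op_eq QQ (PP (gmult h h)) (comp QQ (PP h) (PP h))" using U_hom assms by blast
  then have "op_eq QQ (PP {}) (comp QQ (PP h) (PP h))" by (simp add: gmult_self)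
  then have "op_eq QQ idop (comp QQ (PP h) (PP h))" using P_empty op_eq_sym op_eq_trans by blast
  then have "idop {} {} = comp QQ (PP h) (PP h) {} {}" unfolding op_eq_def by simp
  also have "\<dots> = fst (U h) * fst (U h) * idop {} {}" unfolding comp_pauli using string_sq[OF fQ] by simp
  finally show ?thesis by (simp add: idop_def)
qed

lemma c_real:
  assumes "h \<in> GG"
  shows "cnj (fst (U h)) = fst (U h)"
proof -
  have "fst (U h) = 1 \<or> fst (U h) = -1" using c_sq[OF assms] by (metis square_eq_1_iff power2_eq_square)
  then show ?thesis by auto
qed

lemma UR_herm: "cnj (URR g a b) = URR g b a"
  unfolding U_R_def by (rule string_herm)

lemma US_herm:
  assumes "g \<in> GG"
  shows "cnj (USS g b b') = USS g b' b"
  unfolding U_S_def pauli_op_def using c_real[OF assms] by (simp add: string_herm)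

lemma US_unitary:
  assumes "g \<in> GG"
  shows "op_eq SS (comp SS (adj (USS g)) (USS g)) idop" "op_eq SS (comp SS (USS g) (adj (USS g))) idop"
  using pauli_unitary[OF fS] U_pauli assms unfolding U_S_def by auto

lemma oo_space: "in_space R (oo g)"
  unfolding orient_def by (rule app_in_space)

lemma oo_on: "g \<in> GG \<Longrightarrow> h \<in> GG \<Longrightarrow> (\<Sum>a\<in>Pow R. cnj (oo g a) * oo h a) = (if g = h then 1 else 0)"
  using ideal unfolding inner_def by blast

lemma oo_complete:
  assumes "a \<subseteq> R" "b \<subseteq> R"
  shows "(\<Sum>g\<in>GG. oo g a * cnj (oo g b)) = (if a = b then 1 else 0)"
  using square_complete[of "Pow R" GG oo a b] fR fG card_PowR oo_on assms by auto

end

lemma sum_sep: "(\<Sum>a\<in>A. \<Sum>b\<in>B. (f a * K) * g b) = (\<Sum>a\<in>A. f a) * K * (\<Sum>b\<in>B. (g b :: complex))"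
proof -
  have "(\<Sum>a\<in>A. f a) * K * (\<Sum>b\<in>B. g b) = (\<Sum>a\<in>A. f a * K) * (\<Sum>b\<in>B. g b)"
    by (subst sum_distrib_right) (rule refl)
  also have "\<dots> = (\<Sum>a\<in>A. \<Sum>b\<in>B. (f a * K) * g b)" by (rule sum_product)
  finally show ?thesis by simp
qed

context qrf begin

lemma yQ_facts: "y \<subseteq> QQ \<Longrightarrow> y \<inter> R \<subseteq> R \<and> y - R \<subseteq> SS \<and> (y \<inter> R) \<union> (y - R) = y"
  by auto

lemma P_app_tensor:
  "app QQ (PP g) (vtensor R e \<psi>) y = (if y \<subseteq> QQ then oo g (y \<inter> R) * app SS (USS g) \<psi> (y - R) else 0)"
proof (cases "y \<subseteq> QQ")
  case True
  have "(\<Sum>x\<in>Pow QQ. PP g y x * vtensor R e \<psi> x) =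
      (\<Sum>a\<in>Pow R. \<Sum>b\<in>Pow SS. (URR g (y \<inter> R) a * e a) * (USS g (y - R) b * \<psi> b))"
    unfolding pow_split[OF fQ R_sub] P_split vtensor_def
    by (intro sum.cong refl) (auto simp: split_facts mult_ac)
  also have "\<dots> = (\<Sum>a\<in>Pow R. URR g (y \<inter> R) a * e a) * (\<Sum>b\<in>Pow SS. USS g (y - R) b * \<psi> b)"
    by (rule sum_product[symmetric])
  also have "\<dots> = oo g (y \<inter> R) * app SS (USS g) \<psi> (y - R)"
    unfolding orient_def app_def using True by auto
  finally show ?thesis using True unfolding app_def[of QQ] by simp
qed (simp add: app_def)

lemma adjT_formula:
  "adj TT y x = (\<Sum>g\<in>GG. cnj (oo g (x \<inter> R)) * oo g (y \<inter> R) * USS g (y - R) (x - R))"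
  unfolding adj_def[of TT] disent_def otensor_def ket_bra_def adj_def by (simp add: mult_ac)

lemma T_formula:
  "TT y x = (\<Sum>g\<in>GG. oo g (y \<inter> R) * cnj (oo g (x \<inter> R)) * USS g (y - R) (x - R))"
  unfolding disent_def otensor_def ket_bra_def adj_def
  by (intro sum.cong refl) (simp add: US_herm)

lemma US_sq:
  assumes "g \<in> GG" "b \<subseteq> SS" "b' \<subseteq> SS"
  shows "(\<Sum>c\<in>Pow SS. USS g b c * USS g c b') = idop b b'"
proof -
  have "comp SS (adj (USS g)) (USS g) b b' = idop b b'"
    using US_unitary(1)[OF assms(1)] assms unfolding op_eq_def by auto
  then show ?thesis unfolding comp_def adj_def using US_herm[OF assms(1)] by simp
qed

lemma T_unitary: "op_eq QQ (comp QQ (adj TT) TT) idop"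
  unfolding op_eq_def
proof (intro allI impI)
  fix y x assume y: "y \<subseteq> QQ" and x: "x \<subseteq> QQ"
  have "comp QQ (adj TT) TT y x =
     (\<Sum>a\<in>Pow R. \<Sum>b\<in>Pow SS. \<Sum>g\<in>GG. \<Sum>h\<in>GG.
        (cnj (oo g a) * oo h a * (oo g (y \<inter> R) * cnj (oo h (x \<inter> R)))) * (USS g (y - R) b * USS h b (x - R)))"
    unfolding comp_def pow_split[OF fQ R_sub] adjT_formula T_formula sum_product
    by (intro sum.cong refl) (auto simp: split_facts mult_ac)
  also have "\<dots> = (\<Sum>g\<in>GG. \<Sum>h\<in>GG. \<Sum>a\<in>Pow R. \<Sum>b\<in>Pow SS.
        (cnj (oo g a) * oo h a * (oo g (y \<inter> R) * cnj (oo h (x \<inter> R)))) * (USS g (y - R) b * USS h b (x - R)))"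
    by (rule sum_swap4)
  also have "\<dots> = (\<Sum>g\<in>GG. \<Sum>h\<in>GG. (\<Sum>a\<in>Pow R. cnj (oo g a) * oo h a) * (oo g (y \<inter> R) * cnj (oo h (x \<inter> R))) *
        (\<Sum>b\<in>Pow SS. USS g (y - R) b * USS h b (x - R)))"
    by (simp only: sum_sep)
  also have "\<dots> = (\<Sum>g\<in>GG. \<Sum>h\<in>GG. (if g = h then 1 else 0) * ((oo g (y \<inter> R) * cnj (oo h (x \<inter> R))) *
        (\<Sum>b\<in>Pow SS. USS g (y - R) b * USS h b (x - R))))"
    by (intro sum.cong refl) (simp add: oo_on mult.assoc)
  also have "\<dots> = (\<Sum>g\<in>GG. (oo g (y \<inter> R) * cnj (oo g (x \<inter> R))) * idop (y - R) (x - R))"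
  proof (rule sum.cong[OF refl])
    fix g assume g: "g \<in> GG"
    show "(\<Sum>h\<in>GG. (if g = h then 1 else 0) * ((oo g (y \<inter> R) * cnj (oo h (x \<inter> R))) *
        (\<Sum>b\<in>Pow SS. USS g (y - R) b * USS h b (x - R)))) = (oo g (y \<inter> R) * cnj (oo g (x \<inter> R))) * idop (y - R) (x - R)"
    proof -
      have "y - R \<subseteq> SS" "x - R \<subseteq> SS" using x y by auto
      then show ?thesis using sum_delta_l[OF fG g] US_sq[OF g, of "y - R" "x - R"] by simp
    qed
  qed
  also have "\<dots> = idop (y \<inter> R) (x \<inter> R) * idop (y - R) (x - R)"
    using oo_complete[of "y \<inter> R" "x \<inter> R"] by (simp add: sum_distrib_right[symmetric] idop_def)
  also have "\<dots> = idop y x"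
  proof -
    have "(y \<inter> R = x \<inter> R \<and> y - R = x - R) \<longleftrightarrow> y = x"
    proof
      assume a: "y \<inter> R = x \<inter> R \<and> y - R = x - R"
      have "y = (y \<inter> R) \<union> (y - R)" by auto
      also have "\<dots> = (x \<inter> R) \<union> (x - R)" using a by simp
      also have "\<dots> = x" by auto
      finally show "y = x" .
    qed simp
    then show ?thesis unfolding idop_def by auto
  qed
  finally show "comp QQ (adj TT) TT y x = idop y x" .
qed

end

lemma sum_swap_in:
  "(\<Sum>x\<in>A. f x * (\<Sum>y\<in>B. g x y * h y)) = (\<Sum>y\<in>B. (\<Sum>x\<in>A. f x * g x y) * (h y :: complex))"
proof -
  have "(\<Sum>x\<in>A. f x * (\<Sum>y\<in>B. g x y * h y)) = (\<Sum>x\<in>A. \<Sum>y\<in>B. f x * g x y * h y)"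
    by (simp add: sum_distrib_left mult.assoc)
  also have "\<dots> = (\<Sum>y\<in>B. \<Sum>x\<in>A. f x * g x y * h y)" by (rule sum.swap)
  also have "\<dots> = (\<Sum>y\<in>B. (\<Sum>x\<in>A. f x * g x y) * h y)" by (simp add: sum_distrib_right)
  finally show ?thesis .
qed

context qrf begin

definition Xi :: "vec \<Rightarrow> vec" where
  "Xi \<psi> = (\<lambda>y. ss * (\<Sum>g\<in>GG. app QQ (PP g) (vtensor R e \<psi>) y))"

lemma one_inner: "g \<in> GG \<Longrightarrow> (\<Sum>a\<in>Pow R. cnj (oo g a) * one_R n k R U e a) = ss"
proof -
  assume g: "g \<in> GG"
  have "(\<Sum>a\<in>Pow R. cnj (oo g a) * one_R n k R U e a) = ss * (\<Sum>h\<in>GG. \<Sum>a\<in>Pow R. cnj (oo g a) * oo h a)"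
    unfolding one_R_def by (subst sum.swap) (simp add: sum_distrib_left mult_ac)
  also have "\<dots> = ss * (\<Sum>h\<in>GG. (if g = h then 1 else 0) * 1)"
    using oo_on g by simp
  also have "\<dots> = ss" using sum_delta_l[OF fG g, of "\<lambda>_. 1"] by simp
  finally show ?thesis .
qed

lemma A_step: "app QQ (adj TT) (vtensor R (one_R n k R U e) \<psi>) = Xi \<psi>"
proof
  fix y
  show "app QQ (adj TT) (vtensor R (one_R n k R U e) \<psi>) y = Xi \<psi> y"
  proof (cases "y \<subseteq> QQ")
    case False
    then show ?thesis unfolding Xi_def by (simp add: app_def)
  next
    case True
    have "app QQ (adj TT) (vtensor R (one_R n k R U e) \<psi>) y =
      (\<Sum>a\<in>Pow R. \<Sum>b\<in>Pow SS. \<Sum>g\<in>GG. (cnj (oo g a) * one_R n k R U e a) * oo g (y \<inter> R) * (USS g (y - R) b * \<psi> b))"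
      unfolding app_def pow_split[OF fQ R_sub] adjT_formula vtensor_def using True
      apply (simp only: if_P[OF True] if_True)
      apply (intro sum.cong refl)
      apply (simp add: split_facts)
      apply (simp only: sum_distrib_left sum_distrib_right)
      apply (simp add: mult_ac)
      done
    also have "\<dots> = (\<Sum>a\<in>Pow R. \<Sum>g\<in>GG. \<Sum>b\<in>Pow SS. (cnj (oo g a) * one_R n k R U e a) * oo g (y \<inter> R) * (USS g (y - R) b * \<psi> b))"
      by (rule sum.cong[OF refl], rule sum.swap)
    also have "\<dots> = (\<Sum>g\<in>GG. \<Sum>a\<in>Pow R. \<Sum>b\<in>Pow SS. (cnj (oo g a) * one_R n k R U e a) * oo g (y \<inter> R) * (USS g (y - R) b * \<psi> b))"
      by (rule sum.swap)
    also have "\<dots> = (\<Sum>g\<in>GG. (\<Sum>a\<in>Pow R. cnj (oo g a) * one_R n k R U e a) * oo g (y \<inter> R) * (\<Sum>b\<in>Pow SS. USS g (y - R) b * \<psi> b))"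
      by (simp only: sum_sep)
    also have "\<dots> = (\<Sum>g\<in>GG. ss * (oo g (y \<inter> R) * app SS (USS g) \<psi> (y - R)))"
      using True by (intro sum.cong refl) (auto simp: one_inner app_def)
    also have "\<dots> = Xi \<psi> y"
      unfolding Xi_def P_app_tensor using True by (simp add: sum_distrib_left)
    finally show ?thesis .
  qed
qed

lemma Xi_inv: "h \<in> GG \<Longrightarrow> app QQ (PP h) (Xi \<psi>) = Xi \<psi>"
proof -
  assume h: "h \<in> GG"
  have "app QQ (PP h) (Xi \<psi>) = (\<lambda>y. ss * (\<Sum>g\<in>GG. app QQ (PP h) (app QQ (PP g) (vtensor R e \<psi>)) y))"
    unfolding Xi_def by (rule app_scale_sum)
  also have "\<dots> = (\<lambda>y. ss * (\<Sum>g\<in>GG. app QQ (PP (gmult h g)) (vtensor R e \<psi>) y))"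
  proof -
    have "\<And>g. g \<in> GG \<Longrightarrow> app QQ (PP h) (app QQ (PP g) (vtensor R e \<psi>)) = app QQ (PP (gmult h g)) (vtensor R e \<psi>)"
      unfolding app_app by (rule app_cong[OF op_eq_sym[OF bspec[OF bspec[OF U_hom h]]]])
    then show ?thesis by simp
  qed
  also have "\<dots> = Xi \<psi>"
    unfolding Xi_def using sum_gmult_reindex[OF h, of "\<lambda>g. app QQ (PP g) (vtensor R e \<psi>) _"] by simp
  finally show ?thesis .
qed

definition chiv :: "pauli \<Rightarrow> nat set \<Rightarrow> complex" where
  "chiv Pe h = chi QQ (U h) Pe"

lemma P_E_commute:
  "app QQ (PP h) (app QQ (pauli_op QQ Pe) X) = (\<lambda>y. chiv Pe h * app QQ (pauli_op QQ Pe) (app QQ (PP h) X) y)"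
proof -
  have "comp QQ (PP h) (pauli_op QQ Pe) = (\<lambda>y x. chiv Pe h * comp QQ (pauli_op QQ Pe) (PP h) y x)"
    unfolding chiv_def using pauli_commute[OF fQ] by blast
  then show ?thesis unfolding app_app by (simp add: app_scale_op)
qed

lemma B_eig: "h \<in> GG \<Longrightarrow> app QQ (PP h) (app QQ (pauli_op QQ Pe) (Xi \<psi>)) = (\<lambda>y. chiv Pe h * app QQ (pauli_op QQ Pe) (Xi \<psi>) y)"
  using P_E_commute Xi_inv by simp

lemma oo_cnj: "a \<subseteq> R \<Longrightarrow> cnj (oo h a) = (\<Sum>z\<in>Pow R. URR h z a * cnj (e z))"
  unfolding orient_def app_def by (simp add: UR_herm)

lemma T_piece:
  assumes "b \<subseteq> SS"
  shows "(\<Sum>x\<in>Pow QQ. cnj (oo h (x \<inter> R)) * USS h b (x - R) * X x) =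
         (\<Sum>z\<in>Pow R. cnj (e z) * app QQ (PP h) X (z \<union> b))"
proof -
  have "(\<Sum>z\<in>Pow R. cnj (e z) * app QQ (PP h) X (z \<union> b)) =
        (\<Sum>z\<in>Pow R. cnj (e z) * (\<Sum>x\<in>Pow QQ. URR h z (x \<inter> R) * (USS h b (x - R) * X x)))"
    using assms R_sub by (intro sum.cong refl) (auto simp: app_def P_split split_facts mult_ac)
  also have "\<dots> = (\<Sum>x\<in>Pow QQ. (\<Sum>z\<in>Pow R. cnj (e z) * URR h z (x \<inter> R)) * (USS h b (x - R) * X x))"
    by (rule sum_swap_in)
  also have "\<dots> = (\<Sum>x\<in>Pow QQ. cnj (oo h (x \<inter> R)) * USS h b (x - R) * X x)"
    by (intro sum.cong refl) (auto simp: oo_cnj mult_ac)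
  finally show ?thesis by simp
qed

lemma T_app: "app QQ TT X y = (if y \<subseteq> QQ then (\<Sum>h\<in>GG. oo h (y \<inter> R) *
     (\<Sum>z\<in>Pow R. cnj (e z) * app QQ (PP h) X (z \<union> (y - R)))) else 0)"
proof (cases "y \<subseteq> QQ")
  case True
  have yS: "y - R \<subseteq> SS" using True by auto
  have "app QQ TT X y = (\<Sum>x\<in>Pow QQ. \<Sum>h\<in>GG. oo h (y \<inter> R) * (cnj (oo h (x \<inter> R)) * USS h (y - R) (x - R) * X x))"
    unfolding app_def T_formula using True
    apply simp
    apply (simp only: sum_distrib_left sum_distrib_right)
    apply (simp add: mult_ac)
    done
  also have "\<dots> = (\<Sum>h\<in>GG. oo h (y \<inter> R) * (\<Sum>x\<in>Pow QQ. cnj (oo h (x \<inter> R)) * USS h (y - R) (x - R) * X x))"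
    by (subst sum.swap) (simp add: sum_distrib_left)
  finally show ?thesis using True T_piece[OF yS] by simp
qed (simp add: app_def)

end

lemma inner_cong:
  assumes "\<And>y. y \<subseteq> Q \<Longrightarrow> u y = u' y" "\<And>y. y \<subseteq> Q \<Longrightarrow> v y = v' y"
  shows "inner Q u v = inner Q u' v'"
  unfolding inner_def using assms by (intro sum.cong refl) auto

lemma inner_sums:
  "inner Q (\<lambda>y. c * (\<Sum>g\<in>G. F g y)) (\<lambda>y. d * (\<Sum>g\<in>G. F' g y)) =
   cnj c * d * (\<Sum>g\<in>G. \<Sum>g'\<in>G. inner Q (F g) (F' g'))"
proof -
  have "inner Q (\<lambda>y. c * (\<Sum>g\<in>G. F g y)) (\<lambda>y. d * (\<Sum>g\<in>G. F' g y)) =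
     (\<Sum>y\<in>Pow Q. cnj c * d * (\<Sum>g\<in>G. \<Sum>g'\<in>G. cnj (F g y) * F' g' y))"
  proof -
    have "\<And>y. cnj (c * (\<Sum>g\<in>G. F g y)) * (d * (\<Sum>g\<in>G. F' g y)) =
        cnj c * d * (\<Sum>g\<in>G. \<Sum>g'\<in>G. cnj (F g y) * F' g' y)"
      by (simp only: sum_product[symmetric]) (simp add: mult_ac)
    note eq = this
    show ?thesis by (simp only: inner_def eq)
  qed
  also have "\<dots> = cnj c * d * (\<Sum>y\<in>Pow Q. \<Sum>g\<in>G. \<Sum>g'\<in>G. cnj (F g y) * F' g' y)"
    by (simp add: sum_distrib_left)
  also have "(\<Sum>y\<in>Pow Q. \<Sum>g\<in>G. \<Sum>g'\<in>G. cnj (F g y) * F' g' y) = (\<Sum>g\<in>G. \<Sum>y\<in>Pow Q. \<Sum>g'\<in>G. cnj (F g y) * F' g' y)"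
    by (rule sum.swap)
  also have "\<dots> = (\<Sum>g\<in>G. \<Sum>g'\<in>G. \<Sum>y\<in>Pow Q. cnj (F g y) * F' g' y)"
    by (rule sum.cong[OF refl], rule sum.swap)
  finally show ?thesis unfolding inner_def .
qed

context qrf begin

definition w0 :: "pauli \<Rightarrow> vec" where
  "w0 Pe = (\<lambda>a. \<Sum>h\<in>GG. chiv Pe h * oo h a)"

definition wv :: "pauli \<Rightarrow> vec" where
  "wv Pe = (\<lambda>a. ss * (\<Sum>h\<in>GG. chiv Pe h * oo h a))"

definition Lop :: "pauli \<Rightarrow> op" where
  "Lop Pe = (\<lambda>b b'. \<Sum>z\<in>Pow R. cnj (e z) * (\<Sum>x\<in>Pow QQ. pauli_op QQ Pe (z \<union> b) x *
       (\<Sum>g\<in>GG. oo g (x \<inter> R) * USS g (x - R) b')))"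

definition Phi0 :: "pauli \<Rightarrow> vec \<Rightarrow> vec" where
  "Phi0 Pe \<psi> = (\<lambda>b. \<Sum>z\<in>Pow R. cnj (e z) * app QQ (pauli_op QQ Pe) (Xi \<psi>) (z \<union> b))"

lemma C_formula:
  "app QQ TT (app QQ (pauli_op QQ Pe) (Xi \<psi>)) y = (if y \<subseteq> QQ then w0 Pe (y \<inter> R) * Phi0 Pe \<psi> (y - R) else 0)"
proof (cases "y \<subseteq> QQ")
  case True
  have "\<And>h. h \<in> GG \<Longrightarrow> (\<Sum>z\<in>Pow R. cnj (e z) * app QQ (PP h) (app QQ (pauli_op QQ Pe) (Xi \<psi>)) (z \<union> (y - R)))
      = chiv Pe h * Phi0 Pe \<psi> (y - R)"
    unfolding B_eig Phi0_def by (simp add: sum_distrib_left mult_ac)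
  then have "app QQ TT (app QQ (pauli_op QQ Pe) (Xi \<psi>)) y = (\<Sum>h\<in>GG. oo h (y \<inter> R) * (chiv Pe h * Phi0 Pe \<psi> (y - R)))"
    unfolding T_app using True by simp
  also have "\<dots> = w0 Pe (y \<inter> R) * Phi0 Pe \<psi> (y - R)"
    unfolding w0_def by (subst mult.commute, subst sum_distrib_left) (simp add: mult_ac)
  finally show ?thesis using True by simp
qed (simp add: T_app)

lemma Xi_K: "x \<subseteq> QQ \<Longrightarrow> Xi \<psi> x = ss * (\<Sum>b'\<in>Pow SS. (\<Sum>g\<in>GG. oo g (x \<inter> R) * USS g (x - R) b') * \<psi> b')"
proof -
  assume x: "x \<subseteq> QQ"
  have "Xi \<psi> x = ss * (\<Sum>g\<in>GG. oo g (x \<inter> R) * (\<Sum>b'\<in>Pow SS. USS g (x - R) b' * \<psi> b'))"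
  proof -
    have "x - R \<subseteq> SS" using x by auto
    then show ?thesis unfolding Xi_def P_app_tensor using x by (simp add: app_def)
  qed
  also have "\<dots> = ss * (\<Sum>b'\<in>Pow SS. (\<Sum>g\<in>GG. oo g (x \<inter> R) * USS g (x - R) b') * \<psi> b')"
    by (simp only: sum_swap_in)
  finally show ?thesis .
qed

lemma L_app:
  assumes b: "b \<subseteq> SS"
  shows "app SS (Lop Pe) \<psi> b = complex_of_real (sqrt (real NN)) * Phi0 Pe \<psi> b"
proof -
  define K where "K x b' = (\<Sum>g\<in>GG. oo g (x \<inter> R) * USS g (x - R) b')" for x b'
  have B: "\<And>z. z \<subseteq> R \<Longrightarrow> app QQ (pauli_op QQ Pe) (Xi \<psi>) (z \<union> b) =
      ss * (\<Sum>b'\<in>Pow SS. (\<Sum>x\<in>Pow QQ. pauli_op QQ Pe (z \<union> b) x * K x b') * \<psi> b')"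
  proof -
    fix z assume z: "z \<subseteq> R"
    have zb: "z \<union> b \<subseteq> QQ" using z b R_sub by auto
    have "app QQ (pauli_op QQ Pe) (Xi \<psi>) (z \<union> b) =
        (\<Sum>x\<in>Pow QQ. pauli_op QQ Pe (z \<union> b) x * (ss * (\<Sum>b'\<in>Pow SS. K x b' * \<psi> b')))"
      unfolding app_def using zb by (simp add: Xi_K K_def)
    also have "\<dots> = ss * (\<Sum>x\<in>Pow QQ. pauli_op QQ Pe (z \<union> b) x * (\<Sum>b'\<in>Pow SS. K x b' * \<psi> b'))"
      by (simp add: sum_distrib_left mult_ac)
    also have "\<dots> = ss * (\<Sum>b'\<in>Pow SS. (\<Sum>x\<in>Pow QQ. pauli_op QQ Pe (z \<union> b) x * K x b') * \<psi> b')"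
      by (simp only: sum_swap_in)
    finally show "app QQ (pauli_op QQ Pe) (Xi \<psi>) (z \<union> b) =
      ss * (\<Sum>b'\<in>Pow SS. (\<Sum>x\<in>Pow QQ. pauli_op QQ Pe (z \<union> b) x * K x b') * \<psi> b')" .
  qed
  have "Phi0 Pe \<psi> b = (\<Sum>z\<in>Pow R. cnj (e z) * (ss * (\<Sum>b'\<in>Pow SS. (\<Sum>x\<in>Pow QQ. pauli_op QQ Pe (z \<union> b) x * K x b') * \<psi> b')))"
    unfolding Phi0_def by (intro sum.cong refl) (simp add: B)
  also have "\<dots> = ss * (\<Sum>z\<in>Pow R. cnj (e z) * (\<Sum>b'\<in>Pow SS. (\<Sum>x\<in>Pow QQ. pauli_op QQ Pe (z \<union> b) x * K x b') * \<psi> b'))"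
    by (simp add: sum_distrib_left mult_ac)
  also have "\<dots> = ss * (\<Sum>b'\<in>Pow SS. Lop Pe b b' * \<psi> b')"
    unfolding Lop_def K_def by (simp only: sum_swap_in)
  also have "\<dots> = ss * app SS (Lop Pe) \<psi> b"
    unfolding app_def using b by simp
  finally have "complex_of_real (sqrt (real NN)) * Phi0 Pe \<psi> b = (ss * complex_of_real (sqrt (real NN))) * app SS (Lop Pe) \<psi> b"
    by (simp add: mult_ac)
  then show ?thesis using ss_sqrt by simp
qed

lemma main_eq:
  "app QQ TT (app QQ (pauli_op QQ Pe) (app QQ (adj TT) (vtensor R (one_R n k R U e) \<psi>)))
     = vtensor R (wv Pe) (app SS (Lop Pe) \<psi>)"
proof
  fix y
  show "app QQ TT (app QQ (pauli_op QQ Pe) (app QQ (adj TT) (vtensor R (one_R n k R U e) \<psi>))) y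
     = vtensor R (wv Pe) (app SS (Lop Pe) \<psi>) y"
  proof (cases "y \<subseteq> QQ")
    case True
    have yS: "y - R \<subseteq> SS" using True by auto
    have "vtensor R (wv Pe) (app SS (Lop Pe) \<psi>) y = ss * w0 Pe (y \<inter> R) * (complex_of_real (sqrt (real NN)) * Phi0 Pe \<psi> (y - R))"
      unfolding vtensor_def wv_def w0_def L_app[OF yS] by simp
    also have "\<dots> = (ss * complex_of_real (sqrt (real NN))) * (w0 Pe (y \<inter> R) * Phi0 Pe \<psi> (y - R))"
      by (simp add: mult_ac)
    finally show ?thesis unfolding A_step C_formula using True ss_sqrt by simp
  next
    case False
    then obtain q where q: "q \<in> y" "q \<notin> QQ" unfolding subset_iff by blast
    then have "q \<notin> R" using R_sub by auto
    then have "\<not> (y - R \<subseteq> SS)" using q by auto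
    then show ?thesis unfolding A_step C_formula vtensor_def using False by (simp add: app_def)
  qed
qed

end

context qrf begin

lemma chiv_real: "cnj (chiv Pe h) = chiv Pe h" unfolding chiv_def by (rule chi_cnj)
lemma chiv_sq: "chiv Pe h * chiv Pe h = 1" unfolding chiv_def by (rule chi_sq)

lemma w0_norm: "inner R (w0 Pe) (w0 Pe) = of_nat NN"
proof -
  have "inner R (w0 Pe) (w0 Pe) = (\<Sum>a\<in>Pow R. \<Sum>h\<in>GG. \<Sum>h'\<in>GG. (chiv Pe h * chiv Pe h') * (cnj (oo h a) * oo h' a))"
    unfolding inner_def w0_def
    by (intro sum.cong refl) (simp only: cnj_sum complex_cnj_mult chiv_real sum_product, simp add: mult_ac)
  also have "\<dots> = (\<Sum>h\<in>GG. \<Sum>h'\<in>GG. (chiv Pe h * chiv Pe h') * (\<Sum>a\<in>Pow R. cnj (oo h a) * oo h' a))"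
  proof -
    have "(\<Sum>a\<in>Pow R. \<Sum>h\<in>GG. \<Sum>h'\<in>GG. (chiv Pe h * chiv Pe h') * (cnj (oo h a) * oo h' a)) =
        (\<Sum>h\<in>GG. \<Sum>a\<in>Pow R. \<Sum>h'\<in>GG. (chiv Pe h * chiv Pe h') * (cnj (oo h a) * oo h' a))"
      by (rule sum.swap)
    also have "\<dots> = (\<Sum>h\<in>GG. \<Sum>h'\<in>GG. \<Sum>a\<in>Pow R. (chiv Pe h * chiv Pe h') * (cnj (oo h a) * oo h' a))"
      by (rule sum.cong[OF refl], rule sum.swap)
    finally show ?thesis by (simp add: sum_distrib_left)
  qed
  also have "\<dots> = (\<Sum>h\<in>GG. \<Sum>h'\<in>GG. (if h = h' then 1 else 0) * (chiv Pe h * chiv Pe h'))"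
    by (intro sum.cong refl) (simp add: oo_on)
  also have "\<dots> = (\<Sum>h\<in>GG. 1)"
    by (intro sum.cong refl) (simp add: sum_delta_l[OF fG] chiv_sq)
  finally show ?thesis by simp
qed

lemma Xi_norm: "inner QQ (Xi \<psi>) (Xi \<phi>) = inner SS \<psi> \<phi>"
proof -
  have "inner QQ (Xi \<psi>) (Xi \<phi>) = cnj ss * ss * (\<Sum>g\<in>GG. \<Sum>g'\<in>GG.
      inner QQ (app QQ (PP g) (vtensor R e \<psi>)) (app QQ (PP g') (vtensor R e \<phi>)))"
    unfolding Xi_def by (rule inner_sums)
  also have "\<dots> = cnj ss * ss * (\<Sum>g\<in>GG. \<Sum>g'\<in>GG. (if g = g' then 1 else 0) *
      inner SS (app SS (USS g) \<psi>) (app SS (USS g') \<phi>))"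
  proof -
    have "\<And>g g'. g \<in> GG \<Longrightarrow> g' \<in> GG \<Longrightarrow> inner QQ (app QQ (PP g) (vtensor R e \<psi>)) (app QQ (PP g') (vtensor R e \<phi>))
       = (if g = g' then 1 else 0) * inner SS (app SS (USS g) \<psi>) (app SS (USS g') \<phi>)"
    proof -
      fix g g' assume g: "g \<in> GG" and g': "g' \<in> GG"
      have "inner QQ (app QQ (PP g) (vtensor R e \<psi>)) (app QQ (PP g') (vtensor R e \<phi>)) =
          inner QQ (vtensor R (oo g) (app SS (USS g) \<psi>)) (vtensor R (oo g') (app SS (USS g') \<phi>))"
        by (rule inner_cong) (simp_all add: P_app_tensor vtensor_def[of R "oo g"] vtensor_def[of R "oo g'"])
      also have "\<dots> = inner R (oo g) (oo g') * inner SS (app SS (USS g) \<psi>) (app SS (USS g') \<phi>)"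
        by (rule inner_vtensor[OF fQ R_sub])
      finally show "inner QQ (app QQ (PP g) (vtensor R e \<psi>)) (app QQ (PP g') (vtensor R e \<phi>))
       = (if g = g' then 1 else 0) * inner SS (app SS (USS g) \<psi>) (app SS (USS g') \<phi>)"
        using ideal g g' by simp
    qed
    then show ?thesis by (intro arg_cong[where f="\<lambda>t. cnj ss * ss * t"] sum.cong refl) simp
  qed
  also have "\<dots> = cnj ss * ss * (\<Sum>g\<in>GG. inner SS \<psi> \<phi>)"
  proof -
    have "\<And>g. g \<in> GG \<Longrightarrow> (\<Sum>g'\<in>GG. (if g = g' then 1 else 0) * inner SS (app SS (USS g) \<psi>) (app SS (USS g') \<phi>))
        = inner SS \<psi> \<phi>"
    proof -
      fix g assume g: "g \<in> GG"
      have "(\<Sum>g'\<in>GG. (if g = g' then 1 else 0) * inner SS (app SS (USS g) \<psi>) (app SS (USS g') \<phi>))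
          = inner SS (app SS (USS g) \<psi>) (app SS (USS g) \<phi>)"
        by (rule sum_delta_l[OF fG g])
      also have "\<dots> = inner SS \<psi> \<phi>" by (rule inner_app[OF US_unitary(1)[OF g] fS])
      finally show "(\<Sum>g'\<in>GG. (if g = g' then 1 else 0) * inner SS (app SS (USS g) \<psi>) (app SS (USS g') \<phi>))
        = inner SS \<psi> \<phi>" .
    qed
    then show ?thesis by simp
  qed
  also have "\<dots> = inner SS \<psi> \<phi>"
    using ss_sq NN_pos by simp
  finally show ?thesis .
qed

lemma L_isometry:
  assumes pe: "is_pauli Pe"
  shows "inner SS (app SS (Lop Pe) \<psi>) (app SS (Lop Pe) \<phi>) = inner SS \<psi> \<phi>"
proof -
  let ?sq = "complex_of_real (sqrt (real NN))"
  let ?B = "\<lambda>\<psi>. app QQ (pauli_op QQ Pe) (Xi \<psi>)"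
  have "inner SS (app SS (Lop Pe) \<psi>) (app SS (Lop Pe) \<phi>) = (\<Sum>b\<in>Pow SS. (cnj ?sq * ?sq) * (cnj (Phi0 Pe \<psi> b) * Phi0 Pe \<phi> b))"
    unfolding inner_def by (intro sum.cong refl) (simp add: L_app mult_ac)
  also have "\<dots> = of_nat NN * inner SS (Phi0 Pe \<psi>) (Phi0 Pe \<phi>)"
    unfolding sqrt_sq inner_def by (simp add: sum_distrib_left)
  also have "\<dots> = inner R (w0 Pe) (w0 Pe) * inner SS (Phi0 Pe \<psi>) (Phi0 Pe \<phi>)"
    by (simp add: w0_norm)
  also have "\<dots> = inner QQ (vtensor R (w0 Pe) (Phi0 Pe \<psi>)) (vtensor R (w0 Pe) (Phi0 Pe \<phi>))"
    by (rule inner_vtensor[OF fQ R_sub, symmetric])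
  also have "\<dots> = inner QQ (app QQ TT (?B \<psi>)) (app QQ TT (?B \<phi>))"
    by (rule inner_cong) (simp_all add: C_formula vtensor_def)
  also have "\<dots> = inner QQ (?B \<psi>) (?B \<phi>)"
    by (rule inner_app[OF T_unitary fQ])
  also have "\<dots> = inner QQ (Xi \<psi>) (Xi \<phi>)"
    by (rule inner_app[OF pauli_unitary(1)[OF fQ pe] fQ])
  also have "\<dots> = inner SS \<psi> \<phi>" by (rule Xi_norm)
  finally show ?thesis .
qed

lemma L_unitary:
  assumes pe: "is_pauli Pe"
  shows "unitary_on SS (Lop Pe)"
proof -
  define L where "L = Lop Pe"
  have fPS: "finite (Pow SS)" by simp
  have col: "\<And>b1 b2. b1 \<subseteq> SS \<Longrightarrow> b2 \<subseteq> SS \<Longrightarrow> (\<Sum>c\<in>Pow SS. cnj (L c b1) * L c b2) = (if b1 = b2 then 1 else 0)"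
  proof -
    fix b1 b2 assume b1: "b1 \<subseteq> SS" and b2: "b2 \<subseteq> SS"
    define d1 where "d1 = (\<lambda>b. if b1 = b then 1 else 0 :: complex)"
    define d2 where "d2 = (\<lambda>b. if b2 = b then 1 else 0 :: complex)"
    have a1: "app SS L d1 c = L c b1" if c: "c \<subseteq> SS" for c
    proof -
      have "app SS L d1 c = (\<Sum>b\<in>Pow SS. L c b * (if b1 = b then 1 else 0))"
        unfolding app_def d1_def using c by simp
      also have "\<dots> = L c b1" by (rule sum_delta_r[OF fPS]) (use b1 in simp)
      finally show ?thesis .
    qed
    have a2: "app SS L d2 c = L c b2" if c: "c \<subseteq> SS" for c
    proof -
      have "app SS L d2 c = (\<Sum>b\<in>Pow SS. L c b * (if b2 = b then 1 else 0))"
        unfolding app_def d2_def using c by simp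
      also have "\<dots> = L c b2" by (rule sum_delta_r[OF fPS]) (use b2 in simp)
      finally show ?thesis .
    qed
    have "(\<Sum>c\<in>Pow SS. cnj (L c b1) * L c b2) = inner SS (app SS L d1) (app SS L d2)"
      unfolding inner_def by (rule sum.cong[OF refl]) (simp only: a1 a2 Pow_iff)
    also have "\<dots> = inner SS d1 d2" unfolding L_def by (rule L_isometry[OF pe])
    also have "\<dots> = (\<Sum>c\<in>Pow SS. (if b1 = c then 1 else 0) * d2 c)"
      unfolding inner_def d1_def by (rule sum.cong[OF refl]) simp
    also have "\<dots> = d2 b1" by (rule sum_delta_l[OF fPS]) (use b1 in simp)
    also have "\<dots> = (if b1 = b2 then 1 else 0)" unfolding d2_def by auto
    finally show "(\<Sum>c\<in>Pow SS. cnj (L c b1) * L c b2) = (if b1 = b2 then 1 else 0)" .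
  qed
  have u1: "op_eq SS (comp SS (adj L) L) idop"
    unfolding op_eq_def
  proof (intro allI impI)
    fix y x assume y: "y \<subseteq> SS" and x: "x \<subseteq> SS"
    have "comp SS (adj L) L y x = (\<Sum>c\<in>Pow SS. cnj (L c y) * L c x)"
      unfolding comp_def adj_def by simp
    also have "\<dots> = idop y x" unfolding idop_def by (rule col[OF y x])
    finally show "comp SS (adj L) L y x = idop y x" .
  qed
  have on: "\<And>j j'. j \<in> Pow SS \<Longrightarrow> j' \<in> Pow SS \<Longrightarrow> (\<Sum>c\<in>Pow SS. cnj (L c j) * L c j') = (if j = j' then 1 else 0)"
    using col by simp
  have u2: "op_eq SS (comp SS L (adj L)) idop"
    unfolding op_eq_def
  proof (intro allI impI)
    fix y x assume y: "y \<subseteq> SS" and x: "x \<subseteq> SS"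
    have "comp SS L (adj L) y x = (\<Sum>j\<in>Pow SS. L y j * cnj (L x j))"
      unfolding comp_def adj_def by simp
    also have "\<dots> = idop y x" unfolding idop_def
      by (rule square_complete[of "Pow SS" "Pow SS" "\<lambda>j c. L c j" y x, OF fPS fPS refl on]) (use x y in simp_all)
    finally show "comp SS L (adj L) y x = idop y x" .
  qed
  show ?thesis unfolding unitary_on_def L_def[symmetric] using u1 u2 by simp
qed

end

context qrf begin

lemma comm_fun: "comp QQ (PP g) (pauli_op QQ Pe) = (\<lambda>y x. chiv Pe g * comp QQ (pauli_op QQ Pe) (PP g) y x)"
  unfolding chiv_def using pauli_commute[OF fQ, of "U g" Pe] by blast

lemma comm_fun2: "comp QQ (pauli_op QQ Pe) (PP g) = (\<lambda>y x. chiv Pe g * comp QQ (PP g) (pauli_op QQ Pe) y x)"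
  unfolding chiv_def using pauli_commute[OF fQ, of Pe "U g"] chi_sym by metis

lemma M_nonzero:
  assumes "is_pauli P" "is_pauli P'"
  shows "\<exists>x. x \<subseteq> QQ \<and> comp QQ (pauli_op QQ P) (pauli_op QQ P') {} x \<noteq> 0"
proof -
  define x0 where "x0 = {q \<in> QQ. pm2 (snd P q) (snd P' q) False True \<noteq> 0}"
  have "(\<Prod>q\<in>QQ. pm2 (snd P q) (snd P' q) (q \<in> {}) (q \<in> x0)) \<noteq> 0"
  proof -
    have "\<forall>q\<in>QQ. pm2 (snd P q) (snd P' q) (q \<in> {}) (q \<in> x0) \<noteq> 0"
    proof
      fix q assume q: "q \<in> QQ"
      show "pm2 (snd P q) (snd P' q) (q \<in> {}) (q \<in> x0) \<noteq> 0"
      proof (cases "q \<in> x0")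
        case True then show ?thesis unfolding x0_def by simp
      next
        case False
        then have "pm2 (snd P q) (snd P' q) False True = 0" using q unfolding x0_def by simp
        then have "pm2 (snd P q) (snd P' q) False False \<noteq> 0" using pm2_nz by metis
        then show ?thesis using False by simp
      qed
    qed
    then show ?thesis by (subst prod_zero_iff) auto
  qed
  moreover have "fst P \<noteq> 0" "fst P' \<noteq> 0" using assms unfolding is_pauli_def by auto
  ultimately have "comp QQ (pauli_op QQ P) (pauli_op QQ P') {} x0 \<noteq> 0"
    unfolding comp_pauli comp_string[OF fQ] by simp
  moreover have "x0 \<subseteq> QQ" unfolding x0_def by auto
  ultimately show ?thesis by blast
qed

lemma chiv_mult:
  assumes pe: "is_pauli Pe" and g: "g \<in> GG" and h: "h \<in> GG"
  shows "chiv Pe (gmult g h) = chiv Pe g * chiv Pe h"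
proof -
  define Ep where "Ep = pauli_op QQ Pe"
  define gh where "gh = gmult g h"
  have ghG: "gh \<in> GG" unfolding gh_def using g h by (rule gmult_closed)
  define cg where "cg = chiv Pe g"
  define ch where "ch = chiv Pe h"
  define cgh where "cgh = chiv Pe gh"
  define M where "M = comp QQ (PP gh) Ep"
  have hom: "op_eq QQ (PP gh) (comp QQ (PP g) (PP h))" unfolding gh_def using U_hom g h by blast
  have s1: "op_eq QQ M (comp QQ (comp QQ (PP g) (PP h)) Ep)" unfolding M_def by (rule comp_cong1[OF hom])
  have s2: "comp QQ (comp QQ (PP g) (PP h)) Ep = (\<lambda>y x. ch * (cg * comp QQ Ep (comp QQ (PP g) (PP h)) y x))"
  proof -
    have "comp QQ (comp QQ (PP g) (PP h)) Ep = comp QQ (PP g) (comp QQ (PP h) Ep)" by (rule comp_assoc)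
    also have "\<dots> = comp QQ (PP g) (\<lambda>y x. ch * comp QQ Ep (PP h) y x)" unfolding ch_def Ep_def comm_fun ..
    also have "\<dots> = (\<lambda>y x. ch * comp QQ (PP g) (comp QQ Ep (PP h)) y x)" by (rule comp_scale2)
    also have "\<dots> = (\<lambda>y x. ch * comp QQ (comp QQ (PP g) Ep) (PP h) y x)" by (simp only: comp_assoc)
    also have "\<dots> = (\<lambda>y x. ch * comp QQ (\<lambda>y x. cg * comp QQ Ep (PP g) y x) (PP h) y x)"
      unfolding cg_def Ep_def comm_fun ..
    also have "\<dots> = (\<lambda>y x. ch * (cg * comp QQ (comp QQ Ep (PP g)) (PP h) y x))" by (simp only: comp_scale1)
    also have "\<dots> = (\<lambda>y x. ch * (cg * comp QQ Ep (comp QQ (PP g) (PP h)) y x))" by (simp only: comp_assoc)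
    finally show ?thesis .
  qed
  have s3: "op_eq QQ (comp QQ Ep (comp QQ (PP g) (PP h))) (comp QQ Ep (PP gh))"
    by (rule comp_cong2[OF op_eq_sym[OF hom]])
  have s4: "comp QQ Ep (PP gh) = (\<lambda>y x. cgh * M y x)"
    unfolding cgh_def M_def Ep_def by (rule comm_fun2)
  have key: "\<And>y x. y \<subseteq> QQ \<Longrightarrow> x \<subseteq> QQ \<Longrightarrow> M y x = ch * (cg * (cgh * M y x))"
  proof -
    fix y x assume y: "y \<subseteq> QQ" and x: "x \<subseteq> QQ"
    have "M y x = comp QQ (comp QQ (PP g) (PP h)) Ep y x" using s1 y x unfolding op_eq_def by blast
    also have "\<dots> = ch * (cg * comp QQ Ep (comp QQ (PP g) (PP h)) y x)" unfolding s2 ..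
    also have "comp QQ Ep (comp QQ (PP g) (PP h)) y x = comp QQ Ep (PP gh) y x"
      using s3 y x unfolding op_eq_def by blast
    also have "\<dots> = cgh * M y x" unfolding s4 ..
    finally show "M y x = ch * (cg * (cgh * M y x))" .
  qed
  obtain x0 where x0: "x0 \<subseteq> QQ" "M {} x0 \<noteq> 0"
    using M_nonzero[of "U gh" Pe] U_pauli ghG pe unfolding M_def Ep_def by blast
  have "M {} x0 = (ch * (cg * cgh)) * M {} x0" using key[of "{}" x0] x0 by (simp add: mult_ac)
  then have X: "ch * (cg * cgh) = 1" using x0(2) by simp
  have sqs: "cg * cg = 1" "ch * ch = 1" unfolding cg_def ch_def by (simp_all add: chiv_sq)
  have "cgh = cgh * (cg * cg) * (ch * ch)" using sqs by simp
  also have "\<dots> = (ch * (cg * cgh)) * (cg * ch)" by (simp add: mult_ac)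
  also have "\<dots> = cg * ch" using X by simp
  finally show ?thesis unfolding cgh_def cg_def ch_def gh_def .
qed

lemma w0_inner: "inner R (w0 Pe) (w0 Pe') = (\<Sum>h\<in>GG. chiv Pe h * chiv Pe' h)"
proof -
  have "inner R (w0 Pe) (w0 Pe') = (\<Sum>a\<in>Pow R. \<Sum>h\<in>GG. \<Sum>h'\<in>GG. (chiv Pe h * chiv Pe' h') * (cnj (oo h a) * oo h' a))"
    unfolding inner_def w0_def
    by (intro sum.cong refl) (simp only: cnj_sum complex_cnj_mult chiv_real sum_product, simp add: mult_ac)
  also have "\<dots> = (\<Sum>h\<in>GG. \<Sum>h'\<in>GG. (chiv Pe h * chiv Pe' h') * (\<Sum>a\<in>Pow R. cnj (oo h a) * oo h' a))"
  proof -
    have "(\<Sum>a\<in>Pow R. \<Sum>h\<in>GG. \<Sum>h'\<in>GG. (chiv Pe h * chiv Pe' h') * (cnj (oo h a) * oo h' a)) =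
        (\<Sum>h\<in>GG. \<Sum>a\<in>Pow R. \<Sum>h'\<in>GG. (chiv Pe h * chiv Pe' h') * (cnj (oo h a) * oo h' a))"
      by (rule sum.swap)
    also have "\<dots> = (\<Sum>h\<in>GG. \<Sum>h'\<in>GG. \<Sum>a\<in>Pow R. (chiv Pe h * chiv Pe' h') * (cnj (oo h a) * oo h' a))"
      by (rule sum.cong[OF refl], rule sum.swap)
    finally show ?thesis by (simp add: sum_distrib_left)
  qed
  also have "\<dots> = (\<Sum>h\<in>GG. \<Sum>h'\<in>GG. (if h = h' then 1 else 0) * (chiv Pe h * chiv Pe' h'))"
    by (intro sum.cong refl) (simp add: oo_on)
  also have "\<dots> = (\<Sum>h\<in>GG. chiv Pe h * chiv Pe' h)"
    by (intro sum.cong refl) (simp add: sum_delta_l[OF fG])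
  finally show ?thesis .
qed

lemma w_inner: "inner R (wv Pe) (wv Pe') = cnj ss * ss * (\<Sum>h\<in>GG. chiv Pe h * chiv Pe' h)"
proof -
  have "inner R (wv Pe) (wv Pe') = cnj ss * ss * inner R (w0 Pe) (w0 Pe')"
    unfolding inner_def wv_def w0_def by (simp add: sum_distrib_left mult_ac)
  then show ?thesis by (simp add: w0_inner)
qed

lemma w_norm: "inner R (wv Pe) (wv Pe) = 1"
  unfolding w_inner using ss_sq NN_pos by (simp add: chiv_sq)

lemma w_space: "in_space R (wv Pe)"
  unfolding in_space_def wv_def using oo_space unfolding in_space_def by simp

lemma w_orth:
  assumes pe: "is_pauli Pe" and pe': "is_pauli Pe'" and ne: "wv Pe \<noteq> wv Pe'"
  shows "inner R (wv Pe) (wv Pe') = 0"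
proof -
  obtain h0 where h0: "h0 \<in> GG" "chiv Pe h0 \<noteq> chiv Pe' h0"
  proof -
    have "\<not> (\<forall>h\<in>GG. chiv Pe h = chiv Pe' h)"
    proof
      assume "\<forall>h\<in>GG. chiv Pe h = chiv Pe' h"
      then have "wv Pe = wv Pe'" unfolding wv_def by (intro ext) simp
      then show False using ne by simp
    qed
    then show ?thesis using that by blast
  qed
  define f where "f h = chiv Pe h * chiv Pe' h" for h
  have f0: "f h0 = -1"
    using h0(2) chi_pm[of QQ "U h0" Pe] chi_pm[of QQ "U h0" Pe'] unfolding f_def chiv_def by auto
  have fm: "\<And>h. h \<in> GG \<Longrightarrow> f (gmult h0 h) = f h0 * f h"
    unfolding f_def using chiv_mult[OF pe h0(1)] chiv_mult[OF pe' h0(1)] by (simp add: mult_ac)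
  have "(\<Sum>h\<in>GG. f h) = (\<Sum>h\<in>GG. f (gmult h0 h))" by (rule sum_gmult_reindex[OF h0(1), symmetric])
  also have "\<dots> = (\<Sum>h\<in>GG. f h0 * f h)" by (rule sum.cong[OF refl]) (rule fm)
  also have "\<dots> = - (\<Sum>h\<in>GG. f h)" by (simp add: f0 sum_negf)
  finally have "(\<Sum>h\<in>GG. f h) = 0" by simp
  then show ?thesis unfolding w_inner f_def by simp
qed

end

theorem mainTheorem9:
  fixes n k m :: nat and U :: "nat set \<Rightarrow> pauli" and R :: "nat set" and e :: vec
    and E :: "nat \<Rightarrow> pauli"
  assumes kn: "k \<le> n"
    and U_pauli: "\<forall>g\<in>grp (n - k). is_pauli (U g)"
    and U_hom: "\<forall>g\<in>grp (n - k). \<forall>h\<in>grp (n - k).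
       op_eq {0..<n} (pauli_op {0..<n} (U (gmult g h)))
         (comp {0..<n} (pauli_op {0..<n} (U g)) (pauli_op {0..<n} (U h)))"
    and U_faithful: "\<forall>g\<in>grp (n - k). \<forall>h\<in>grp (n - k).
       op_eq {0..<n} (pauli_op {0..<n} (U g)) (pauli_op {0..<n} (U h)) \<longrightarrow> g = h"
    and U_no_minus: "\<forall>g\<in>grp (n - k). \<not> op_eq {0..<n} (pauli_op {0..<n} (U g)) (\<lambda>y x. - idop y x)"
    and R_sub: "R \<subseteq> {0..<n}" and R_card: "card R = n - k"
    and UR_faithful: "\<forall>g\<in>grp (n - k). \<forall>h\<in>grp (n - k).
       op_eq R (U_R R U g) (U_R R U h) \<longrightarrow> g = h"
    and US_nontrivial: "\<exists>g\<in>grp (n - k). \<not> op_eq ({0..<n} - R) (U_S {0..<n} R U g) idop"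
    and e_space: "in_space R e"
    and ideal: "\<forall>g\<in>grp (n - k). \<forall>h\<in>grp (n - k).
       inner R (orient R U e g) (orient R U e h) = (if g = h then 1 else 0)"
    and E_pauli: "\<forall>i<m. is_pauli (E i)"
    and correctable: "\<exists>C :: nat \<Rightarrow> nat \<Rightarrow> complex.
       (\<forall>i<m. \<forall>j<m. C j i = cnj (C i j)) \<and>
       (\<forall>i<m. \<forall>j<m. op_eq {0..<n}
          (comp {0..<n} (code_proj n k U)
             (comp {0..<n} (adj (pauli_op {0..<n} (E i)))
                (comp {0..<n} (pauli_op {0..<n} (E j)) (code_proj n k U))))
          (\<lambda>y x. C i j * code_proj n k U y x))"
  shows "\<exists>(w :: nat \<Rightarrow> vec) (L :: nat \<Rightarrow> op).
     (\<forall>i<m. in_space R (w i) \<and> inner R (w i) (w i) = 1) \<and>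
     (\<forall>i<m. \<forall>j<m. w i \<noteq> w j \<longrightarrow> inner R (w i) (w j) = 0) \<and>
     (\<forall>i<m. unitary_on ({0..<n} - R) (L i)) \<and>
     (\<forall>\<psi>. in_space ({0..<n} - R) \<psi> \<longrightarrow>
        (\<forall>i<m. app {0..<n} (disent n k R U e)
                 (app {0..<n} (pauli_op {0..<n} (E i))
                    (app {0..<n} (adj (disent n k R U e)) (vtensor R (one_R n k R U e) \<psi>)))
               = vtensor R (w i) (app ({0..<n} - R) (L i) \<psi>)))"
proof -
  interpret qrf n k U R e
    by (intro qrf.intro) (fact U_pauli, fact U_hom, fact R_sub, fact R_card, fact ideal)
  have 1: "\<forall>i<m. in_space R (wv (E i)) \<and> inner R (wv (E i)) (wv (E i)) = 1"
    using w_space w_norm by simp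
  have 2: "\<forall>i<m. \<forall>j<m. wv (E i) \<noteq> wv (E j) \<longrightarrow> inner R (wv (E i)) (wv (E j)) = 0"
    using w_orth E_pauli by blast
  have 3: "\<forall>i<m. unitary_on ({0..<n} - R) (Lop (E i))"
    using L_unitary E_pauli by blast
  have 4: "\<forall>\<psi>. in_space ({0..<n} - R) \<psi> \<longrightarrow>
        (\<forall>i<m. app {0..<n} (disent n k R U e)
                 (app {0..<n} (pauli_op {0..<n} (E i))
                    (app {0..<n} (adj (disent n k R U e)) (vtensor R (one_R n k R U e) \<psi>)))
               = vtensor R (wv (E i)) (app ({0..<n} - R) (Lop (E i)) \<psi>))"
    by (intro allI impI) (rule main_eq)
  show ?thesis
    apply (rule exI[of _ "\<lambda>i. wv (E i)"])
    apply (rule exI[of _ "\<lambda>i. Lop (E i)"])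
    apply (intro conjI)
       apply (fact 1)
      apply (fact 2)
     apply (fact 3)
    apply (fact 4)
    done
qed

end
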